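(* For positive integers $a,b,n$ and nonnegative integers $c$ and $k\le n$, $$\Psi_n(k,a,b,c)=\Psi_n(n-k,b+1,a-1,c).$$
   Context: All constant terms are taken with $\operatorname{CT}_x=\operatorname{CT}_{x_n}\cdots\operatorname{CT}_{x_1}$ (iterated constant-term extraction), where $(1-x_i)^{-b}$ and $x_i/(1-x_i)$ are expanded as power series in $x_i$, and for $i<j$, $(x_j-x_i)^{-c}=x_j^{-c}(1-x_i/x_j)^{-c}$ is expanded as a power series in $x_i/x_j$. $$\Psi_n(k,a,b,c):=\operatorname{CT}_x[t^k]\prod_{i=1}^n(1-x_i)^{-b}x_i^{-a+1}\Big(1+t\frac{x_i}{1-x_i}\Big)\prod_{1\le i<j\le n}(x_j-x_i)^{-c},$$ with $[t^k]$ the coefficient of $t^k$ (the definition makes sense for any integers $a,b$). *)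

theory Defs
  imports Complex_Main
begin

text \<open>Iterated constant term Psi_n(k,a,b,c), written out as the coefficient
extraction from the literal expansion of every factor (variables indexed 0..n-1,
x_0 << x_1 << ... ).
  r i : exponent taken from (1 - x_i)^(-b) = sum_r (-1)^r ((-b) gchoose r) x_i^r
  s i : exponent taken from (1 + t x_i/(1-x_i)) = 1 + sum_(s>=1) t x_i^s
        (s i = 0 means the term 1; s i > 0 contributes one factor t)
  p i j (i<j) : exponent from (x_j - x_i)^(-c) = x_j^(-c) sum_p (-1)^p ((-c) gchoose p) (x_i/x_j)^p
The coefficient of t^k forces exactly k indices with s i > 0; the constant term
forces the total exponent of every x_l to vanish.\<close>

definition Psi_terms :: "nat \<Rightarrow> nat \<Rightarrow> int \<Rightarrow> nat \<Rightarrow>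
    ((nat \<Rightarrow> nat) \<times> (nat \<Rightarrow> nat) \<times> (nat \<Rightarrow> nat \<Rightarrow> nat)) set" where
  "Psi_terms n k a c = {(r, s, p).
     (\<forall>i. n \<le> i \<longrightarrow> r i = 0 \<and> s i = 0) \<and>
     (\<forall>i j. \<not> (i < j \<and> j < n) \<longrightarrow> p i j = 0) \<and>
     card {i \<in> {..<n}. s i > 0} = k \<and>
     (\<forall>l<n. 1 - a + int (r l) + int (s l) + (\<Sum>j\<in>{l<..<n}. int (p l j))
              - (\<Sum>i<l. int c + int (p i l)) = 0)}"

definition Psi :: "nat \<Rightarrow> nat \<Rightarrow> int \<Rightarrow> int \<Rightarrow> nat \<Rightarrow> real" where
  "Psi n k a b c =
     (\<Sum>(r, s, p) \<in> Psi_terms n k a c.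
        (\<Prod>i<n. (-1) ^ r i * ((- of_int b :: real) gchoose r i)) *
        (\<Prod>j<n. \<Prod>i<j. (-1) ^ p i j * ((- of_nat c :: real) gchoose p i j)))"

end

theory Submission
  imports Defs "HOL-Computational_Algebra.Formal_Power_Series"
begin


definition PZ :: "nat \<Rightarrow> (nat \<Rightarrow> 'a set) \<Rightarrow> (nat \<Rightarrow> 'a::zero) set" where
  "PZ n X = {u. (\<forall>l<n. u l \<in> X l) \<and> (\<forall>l. n \<le> l \<longrightarrow> u l = 0)}"

lemma PZ_0: "PZ 0 X = {\<lambda>_. 0}"
  by (auto simp: PZ_def)

lemma PZ_Suc: "PZ (Suc m) X = (\<lambda>(u, v). u(m := v)) ` (PZ m X \<times> X m)"
proof (rule set_eqI, rule iffI)
  fix w assume w: "w \<in> PZ (Suc m) X"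
  have "w = (\<lambda>(u, v). u(m := v)) (w(m := 0), w m)" by auto
  moreover have "(w(m := 0), w m) \<in> PZ m X \<times> X m"
    using w by (auto simp: PZ_def)
  ultimately show "w \<in> (\<lambda>(u, v). u(m := v)) ` (PZ m X \<times> X m)" by blast
next
  fix w assume "w \<in> (\<lambda>(u, v). u(m := v)) ` (PZ m X \<times> X m)"
  then show "w \<in> PZ (Suc m) X" by (auto simp: PZ_def less_Suc_eq)
qed

lemma PZ_Suc_inj: "inj_on (\<lambda>(u, v). u(m := v)) (PZ m X \<times> X m)"
proof (rule inj_onI, clarsimp)
  fix u v u' v'
  assume "u \<in> PZ m X" "u' \<in> PZ m X" "u(m := v) = u'(m := v')"
  then have 1: "\<And>x. (u(m := v)) x = (u'(m := v')) x" by simp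
  from 1[of m] have "v = v'" by simp
  moreover have "u = u'"
  proof
    fix x show "u x = u' x"
      using 1[of x] \<open>u \<in> PZ m X\<close> \<open>u' \<in> PZ m X\<close> by (cases "x = m") (auto simp: PZ_def)
  qed
  ultimately show "u = u' \<and> v = v'" by simp
qed

lemma finite_PZ: "(\<And>l. l < n \<Longrightarrow> finite (X l)) \<Longrightarrow> finite (PZ n X)"
proof (induction n)
  case 0 then show ?case by (simp add: PZ_0)
next
  case (Suc m)
  then show ?case by (simp add: PZ_Suc)
qed

lemma PZ_prod_sum:
  fixes f :: "nat \<Rightarrow> 'a::zero \<Rightarrow> 'b::comm_semiring_1"
  assumes "\<And>l. l < n \<Longrightarrow> finite (X l)"
  shows "(\<Sum>u\<in>PZ n X. \<Prod>l<n. f l (u l)) = (\<Prod>l<n. \<Sum>v\<in>X l. f l v)"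
  using assms
proof (induction n)
  case 0 then show ?case by (simp add: PZ_0)
next
  case (Suc m)
  have fin: "finite (PZ m X)" using Suc.prems by (intro finite_PZ) auto
  have "(\<Sum>u\<in>PZ (Suc m) X. \<Prod>l<Suc m. f l (u l))
      = (\<Sum>uv\<in>PZ m X \<times> X m. \<Prod>l<Suc m. f l ((\<lambda>(u, v). u(m := v)) uv l))"
    unfolding PZ_Suc by (subst sum.reindex[OF PZ_Suc_inj]) (simp add: comp_def)
  also have "\<dots> = (\<Sum>(u,v)\<in>PZ m X \<times> X m. (\<Prod>l<m. f l (u l)) * f m v)"
  proof (rule sum.cong[OF refl])
    fix x assume x: "x \<in> PZ m X \<times> X m"
    obtain u v where uv: "x = (u, v)" by (cases x)
    with x have "u m = 0" by (simp add: PZ_def)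
    then show "(\<Prod>l<Suc m. f l ((\<lambda>(u, v). u(m := v)) x l)) = (\<lambda>(u,v). (\<Prod>l<m. f l (u l)) * f m v) x"
      unfolding uv by (simp add: lessThan_Suc mult.commute)
  qed
  also have "\<dots> = (\<Sum>u\<in>PZ m X. \<Sum>v\<in>X m. (\<Prod>l<m. f l (u l)) * f m v)"
    by (simp add: sum.cartesian_product')
  also have "\<dots> = (\<Sum>u\<in>PZ m X. \<Prod>l<m. f l (u l)) * (\<Sum>v\<in>X m. f m v)"
    by (rule sum_product[symmetric])
  also have "\<dots> = (\<Prod>l<Suc m. \<Sum>v\<in>X l. f l v)"
    using Suc by simp
  finally show ?case .
qed



definition Tri :: "nat \<Rightarrow> (nat \<Rightarrow> nat \<Rightarrow> nat) set" where
  "Tri n = {p. \<forall>i j. \<not> (i < j \<and> j < n) \<longrightarrow> p i j = 0}"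

definition mexp :: "nat \<Rightarrow> nat \<Rightarrow> (nat \<Rightarrow> nat \<Rightarrow> nat) \<Rightarrow> nat \<Rightarrow> int" where
  "mexp n c p l = (\<Sum>i<l. int c + int (p i l)) - (\<Sum>j\<in>{l<..<n}. int (p l j))"

definition mc :: "nat \<Rightarrow> nat \<Rightarrow> real" where
  "mc c q = (-1) ^ q * ((- of_nat c) gchoose q)"

definition wt :: "nat \<Rightarrow> nat \<Rightarrow> (nat \<Rightarrow> nat \<Rightarrow> nat) \<Rightarrow> real" where
  "wt n c p = (\<Prod>j<n. \<Prod>i<j. mc c (p i j))"

definition trm :: "nat \<Rightarrow> nat \<Rightarrow> (nat \<Rightarrow> int \<Rightarrow> real) \<Rightarrow> (nat \<Rightarrow> nat \<Rightarrow> nat) \<Rightarrow> real" where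
  "trm n c F p = wt n c p * (\<Prod>l<n. F l (mexp n c p l))"

definition Lf :: "nat \<Rightarrow> nat \<Rightarrow> (nat \<Rightarrow> int \<Rightarrow> real) \<Rightarrow> real" where
  "Lf n c F = (\<Sum>p \<in> {p \<in> Tri n. trm n c F p \<noteq> 0}. trm n c F p)"

definition Pc :: "nat \<Rightarrow> nat \<Rightarrow> (nat \<Rightarrow> int) \<Rightarrow> (nat \<Rightarrow> nat \<Rightarrow> nat) set" where
  "Pc n c A = {p \<in> Tri n. \<forall>l<n. A l \<le> mexp n c p l}"

definition PS :: "nat \<Rightarrow> nat \<Rightarrow> (nat \<Rightarrow> int) \<Rightarrow> (nat \<Rightarrow> int \<Rightarrow> real) \<Rightarrow> real" where
  "PS n c A F = (\<Sum>p\<in>Pc n c A. trm n c F p)"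

definition join :: "nat \<Rightarrow> (nat \<Rightarrow> nat) \<Rightarrow> (nat \<Rightarrow> nat \<Rightarrow> nat) \<Rightarrow> nat \<Rightarrow> nat \<Rightarrow> nat" where
  "join m q p' = (\<lambda>i j. if i = 0 then (if 0 < j \<and> j \<le> m then q (j - 1) else 0) else p' (i - 1) (j - 1))"

abbreviation Box :: "nat \<Rightarrow> nat \<Rightarrow> (nat \<Rightarrow> nat) set" where
  "Box m K \<equiv> PZ m (\<lambda>_. {..K})"

lemma join_Tri: "p' \<in> Tri m \<Longrightarrow> join m q p' \<in> Tri (Suc m)"
  unfolding Tri_def
proof (intro CollectI allI impI)
  fix i j assume p': "p' \<in> {p. \<forall>i j. \<not> (i < j \<and> j < m) \<longrightarrow> p i j = 0}"
    and ij: "\<not> (i < j \<and> j < Suc m)"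
  show "join m q p' i j = 0"
  proof (cases "i = 0")
    case True then show ?thesis using ij by (auto simp: join_def)
  next
    case False
    then have "\<not> (i - 1 < j - 1 \<and> j - 1 < m)" using ij by auto
    then show ?thesis using p' False by (simp add: join_def)
  qed
qed

lemma join_00: "join m q p' i 0 = (if i = 0 then 0 else p' (i - 1) 0)"
  by (simp add: join_def)

lemma join_inj:
  assumes "\<forall>j\<ge>m. q j = 0" "\<forall>j\<ge>m. q2 j = 0" "p' \<in> Tri m" "p2 \<in> Tri m"
    and "join m q p' = join m q2 p2"
  shows "q = q2 \<and> p' = p2"
proof
  show "q = q2"
  proof
    fix j
    show "q j = q2 j"
    proof (cases "j < m")
      case True
      have "join m q p' 0 (Suc j) = join m q2 p2 0 (Suc j)" using assms(5) by simp
      with True show ?thesis by (simp add: join_def)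
    next
      case False then show ?thesis using assms(1,2) by simp
    qed
  qed
  show "p' = p2"
  proof (intro ext)
    fix i j
    have "join m q p' (Suc i) (Suc j) = join m q2 p2 (Suc i) (Suc j)" using assms(5) by simp
    then show "p' i j = p2 i j" by (simp add: join_def)
  qed
qed

definition splitq :: "nat \<Rightarrow> (nat \<Rightarrow> nat \<Rightarrow> nat) \<Rightarrow> nat \<Rightarrow> nat" where
  "splitq m p = (\<lambda>j. if j < m then p 0 (Suc j) else 0)"

definition splitp :: "(nat \<Rightarrow> nat \<Rightarrow> nat) \<Rightarrow> nat \<Rightarrow> nat \<Rightarrow> nat" where
  "splitp p = (\<lambda>i j. p (Suc i) (Suc j))"

lemma split_join:
  assumes "p \<in> Tri (Suc m)"
  shows "join m (splitq m p) (splitp p) = p" "splitp p \<in> Tri m"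
proof -
  show "join m (splitq m p) (splitp p) = p"
  proof (intro ext)
    fix i j
    show "join m (splitq m p) (splitp p) i j = p i j"
      using assms unfolding join_def splitq_def splitp_def Tri_def
      by (cases i; cases j) auto
  qed
  show "splitp p \<in> Tri m" using assms unfolding Tri_def splitp_def by auto
qed

lemma gtlt_Suc: "{l<..<n} = {Suc l..<n}" by auto

lemma wt_join: "wt (Suc m) c (join m q p') = (\<Prod>j<m. mc c (q j)) * wt m c p'"
proof -
  have "wt (Suc m) c (join m q p') = (\<Prod>j<m. \<Prod>i<Suc j. mc c (join m q p' i (Suc j)))"
    unfolding wt_def by (subst prod.lessThan_Suc_shift) simp
  also have "\<dots> = (\<Prod>j<m. mc c (q j) * (\<Prod>i<j. mc c (p' i j)))"
    by (intro prod.cong refl, subst prod.lessThan_Suc_shift) (simp add: join_def)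
  also have "\<dots> = (\<Prod>j<m. mc c (q j)) * wt m c p'"
    by (simp add: prod.distrib wt_def)
  finally show ?thesis .
qed

lemma mexp_join0: "mexp (Suc m) c (join m q p') 0 = - int (\<Sum>j<m. q j)"
proof -
  have "(\<Sum>j\<in>{0<..<Suc m}. int (join m q p' 0 j)) = (\<Sum>j\<in>{Suc 0..<Suc m}. int (join m q p' 0 j))"
    by (simp add: gtlt_Suc)
  also have "\<dots> = (\<Sum>j\<in>{0..<m}. int (join m q p' 0 (Suc j)))"
    by (rule sum.shift_bounds_Suc_ivl)
  also have "\<dots> = (\<Sum>j<m. int (q j))"
    by (intro sum.cong) (auto simp: join_def)
  finally show ?thesis by (simp add: mexp_def)
qed

lemma mexp_joinS:
  assumes "l < m"
  shows "mexp (Suc m) c (join m q p') (Suc l) = int c + int (q l) + mexp m c p' l"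
proof -
  have 1: "(\<Sum>i<Suc l. int c + int (join m q p' i (Suc l))) = int c + int (q l) + (\<Sum>i<l. int c + int (p' i l))"
    using assms by (subst sum.lessThan_Suc_shift) (simp add: join_def)
  have "(\<Sum>j\<in>{Suc l<..<Suc m}. int (join m q p' (Suc l) j)) = (\<Sum>j\<in>{Suc (Suc l)..<Suc m}. int (join m q p' (Suc l) j))"
    by (simp add: gtlt_Suc)
  also have "\<dots> = (\<Sum>j\<in>{Suc l..<m}. int (join m q p' (Suc l) (Suc j)))"
    by (rule sum.shift_bounds_Suc_ivl)
  also have "\<dots> = (\<Sum>j\<in>{l<..<m}. int (p' l j))"
    by (simp add: join_def gtlt_Suc)
  finally show ?thesis using 1 by (simp add: mexp_def)
qed

lemma trm_join:
  "trm (Suc m) c F (join m q p') =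
     (\<Prod>j<m. mc c (q j)) * F 0 (- int (\<Sum>j<m. q j)) *
     trm m c (\<lambda>l x. F (Suc l) (x + int c + int (q l))) p'"
proof -
  have "(\<Prod>l<Suc m. F l (mexp (Suc m) c (join m q p') l))
      = F 0 (- int (\<Sum>j<m. q j)) * (\<Prod>l<m. F (Suc l) (mexp m c p' l + int c + int (q l)))"
  proof -
    have "(\<Prod>l<m. F (Suc l) (mexp (Suc m) c (join m q p') (Suc l))) = (\<Prod>l<m. F (Suc l) (mexp m c p' l + int c + int (q l)))"
      by (intro prod.cong refl) (simp add: mexp_joinS add_ac)
    then show ?thesis by (subst prod.lessThan_Suc_shift) (simp add: mexp_join0)
  qed
  then show ?thesis
    unfolding trm_def wt_join by (simp add: ac_simps)
qed



lemma Tri_0: "Tri 0 = {\<lambda>_ _. 0}"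
  by (auto simp: Tri_def)

lemma Pc_Suc:
  assumes K: "- A 0 \<le> int K"
  shows "Pc (Suc m) c A = (\<lambda>(q, p'). join m q p') `
     (SIGMA q:{q \<in> Box m K. A 0 \<le> - int (\<Sum>j<m. q j)}. Pc m c (\<lambda>l. A (Suc l) - int c - int (q l)))"
proof (rule set_eqI, rule iffI)
  fix p assume p: "p \<in> Pc (Suc m) c A"
  then have pT: "p \<in> Tri (Suc m)" by (simp add: Pc_def)
  define q where "q = splitq m p"
  define p' where "p' = splitp p"
  have pj: "p = join m q p'" using split_join[OF pT] by (simp add: q_def p'_def)
  have p'T: "p' \<in> Tri m" using split_join[OF pT] by (simp add: p'_def)
  have "A 0 \<le> mexp (Suc m) c p 0" using p by (simp add: Pc_def)
  then have s: "A 0 \<le> - int (\<Sum>j<m. q j)" using pj mexp_join0 by metis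
  have qz: "\<forall>l\<ge>m. q l = 0" by (simp add: q_def splitq_def)
  have "q \<in> Box m K"
    unfolding PZ_def
  proof (intro CollectI conjI allI impI)
    fix l assume "l < m"
    then have "q l \<le> (\<Sum>j<m. q j)" by (intro member_le_sum) auto
    then have "int (q l) \<le> int K" using s K by linarith
    then show "q l \<in> {..K}" by simp
  next
    fix l assume "m \<le> l" then show "q l = 0" using qz by simp
  qed
  moreover have "p' \<in> Pc m c (\<lambda>l. A (Suc l) - int c - int (q l))"
    unfolding Pc_def
  proof (intro CollectI conjI allI impI p'T)
    fix l assume l: "l < m"
    have "A (Suc l) \<le> mexp (Suc m) c p (Suc l)" using p l by (simp add: Pc_def)
    then show "A (Suc l) - int c - int (q l) \<le> mexp m c p' l"
      using mexp_joinS[OF l, of c q p'] pj by simp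
  qed
  ultimately show "p \<in> (\<lambda>(q, p'). join m q p') `
     (SIGMA q:{q \<in> Box m K. A 0 \<le> - int (\<Sum>j<m. q j)}. Pc m c (\<lambda>l. A (Suc l) - int c - int (q l)))"
    using pj s by blast
next
  fix p assume "p \<in> (\<lambda>(q, p'). join m q p') `
     (SIGMA q:{q \<in> Box m K. A 0 \<le> - int (\<Sum>j<m. q j)}. Pc m c (\<lambda>l. A (Suc l) - int c - int (q l)))"
  then obtain q p' where pj: "p = join m q p'" and q: "q \<in> Box m K" and s: "A 0 \<le> - int (\<Sum>j<m. q j)"
    and p': "p' \<in> Pc m c (\<lambda>l. A (Suc l) - int c - int (q l))" by auto
  have "p \<in> Tri (Suc m)" using pj p' join_Tri by (simp add: Pc_def)
  moreover have "\<forall>l<Suc m. A l \<le> mexp (Suc m) c p l"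
  proof (intro allI impI)
    fix l assume "l < Suc m"
    then show "A l \<le> mexp (Suc m) c p l"
    proof (cases l)
      case 0 then show ?thesis using s pj mexp_join0 by metis
    next
      case (Suc l')
      with \<open>l < Suc m\<close> have l': "l' < m" by simp
      have "A (Suc l') - int c - int (q l') \<le> mexp m c p' l'" using p' l' by (simp add: Pc_def)
      then show ?thesis using mexp_joinS[OF l', of c q p'] pj Suc by simp
    qed
  qed
  ultimately show "p \<in> Pc (Suc m) c A" by (simp add: Pc_def)
qed

lemma join_inj_on:
  "inj_on (\<lambda>(q, p'). join m q p') (SIGMA q:{q \<in> Box m K. P q}. Pc m c (B q))"
proof (rule inj_onI, clarify)
  fix q p' q2 p2
  assume "q \<in> Box m K" "q2 \<in> Box m K" "p' \<in> Pc m c (B q)" "p2 \<in> Pc m c (B q2)"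
    "join m q p' = join m q2 p2"
  then show "q = q2 \<and> p' = p2"
    by (intro join_inj) (auto simp: PZ_def Pc_def)
qed

lemma finite_Pc: "finite (Pc n c A)"
proof (induction n arbitrary: A)
  case 0
  have "Pc 0 c A \<subseteq> Tri 0" by (auto simp: Pc_def)
  then show ?case using Tri_0 finite_subset by fastforce
next
  case (Suc m)
  have K: "- A 0 \<le> int (nat (- A 0))" by simp
  have "finite (Box m (nat (- A 0)))" by (intro finite_PZ) auto
  then have "finite {q \<in> Box m (nat (- A 0)). A 0 \<le> - int (\<Sum>j<m. q j)}" by simp
  then show ?case unfolding Pc_Suc[where A=A and K="nat (- A 0)", OF K] using Suc.IH by (intro finite_imageI finite_SigmaI)
qed

lemma PS_Suc:
  assumes K: "- A 0 \<le> int K" and F0: "\<And>x. x < A 0 \<Longrightarrow> F 0 x = 0"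
  shows "PS (Suc m) c A F = (\<Sum>q\<in>Box m K. (\<Prod>j<m. mc c (q j)) * F 0 (- int (\<Sum>j<m. q j)) *
            PS m c (\<lambda>l. A (Suc l) - int c - int (q l)) (\<lambda>l x. F (Suc l) (x + int c + int (q l))))"
proof -
  let ?S = "{q \<in> Box m K. A 0 \<le> - int (\<Sum>j<m. q j)}"
  have finB: "finite (Box m K)" by (intro finite_PZ) auto
  have "PS (Suc m) c A F = (\<Sum>(q, p')\<in>(SIGMA q:?S. Pc m c (\<lambda>l. A (Suc l) - int c - int (q l))).
           trm (Suc m) c F (join m q p'))"
    unfolding PS_def Pc_Suc[where A=A and K=K, OF K] by (subst sum.reindex[OF join_inj_on]) (simp add: case_prod_beta comp_def)
  also have "\<dots> = (\<Sum>q\<in>?S. \<Sum>p'\<in>Pc m c (\<lambda>l. A (Suc l) - int c - int (q l)). trm (Suc m) c F (join m q p'))"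
    using finB by (subst sum.Sigma) (auto simp: finite_Pc)
  also have "\<dots> = (\<Sum>q\<in>?S. (\<Prod>j<m. mc c (q j)) * F 0 (- int (\<Sum>j<m. q j)) *
            PS m c (\<lambda>l. A (Suc l) - int c - int (q l)) (\<lambda>l x. F (Suc l) (x + int c + int (q l))))"
    unfolding PS_def trm_join by (simp add: sum_distrib_left)
  also have "\<dots> = (\<Sum>q\<in>Box m K. (\<Prod>j<m. mc c (q j)) * F 0 (- int (\<Sum>j<m. q j)) *
            PS m c (\<lambda>l. A (Suc l) - int c - int (q l)) (\<lambda>l x. F (Suc l) (x + int c + int (q l))))"
    using finB F0 by (intro sum.mono_neutral_left) auto
  finally show ?thesis .
qed

lemma Lf_PS:
  assumes "\<And>l x. l < n \<Longrightarrow> x < A l \<Longrightarrow> F l x = 0"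
  shows "Lf n c F = PS n c A F"
proof -
  have sub: "{p \<in> Tri n. trm n c F p \<noteq> 0} \<subseteq> Pc n c A"
  proof
    fix p assume p: "p \<in> {p \<in> Tri n. trm n c F p \<noteq> 0}"
    then have "\<forall>l<n. F l (mexp n c p l) \<noteq> 0" by (auto simp: trm_def)
    then have "\<forall>l<n. A l \<le> mexp n c p l" using assms by (meson not_le)
    then show "p \<in> Pc n c A" using p by (simp add: Pc_def)
  qed
  show ?thesis unfolding Lf_def PS_def
    by (rule sum.mono_neutral_left[OF finite_Pc sub]) (auto simp: Pc_def)
qed

lemma Lf_cong: assumes "\<And>l x. l < n \<Longrightarrow> F l x = G l x" shows "Lf n c F = Lf n c G"
proof -
  have "\<And>p. (\<Prod>l<n. F l (mexp n c p l)) = (\<Prod>l<n. G l (mexp n c p l))"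
    by (intro prod.cong) (auto simp: assms)
  then show ?thesis unfolding Lf_def trm_def by simp
qed

lemma PS_cong: assumes "\<And>l x. l < n \<Longrightarrow> F l x = G l x" shows "PS n c A F = PS n c A G"
proof -
  have "\<And>p. (\<Prod>l<n. F l (mexp n c p l)) = (\<Prod>l<n. G l (mexp n c p l))"
    by (intro prod.cong) (auto simp: assms)
  then show ?thesis unfolding PS_def trm_def by simp
qed



definition Bf :: "int \<Rightarrow> int \<Rightarrow> int \<Rightarrow> real" where
  "Bf e g x = (if e \<le> x then (-1) ^ nat (x - e) * (of_int g gchoose nat (x - e)) else 0)"

definition neg1 :: "int \<Rightarrow> real" where
  "neg1 z = (if even z then 1 else -1)"

lemma neg1_add: "neg1 (a + b) = neg1 a * neg1 b"
  by (auto simp: neg1_def)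

lemma neg1_uminus: "neg1 (- a) = neg1 a"
  by (auto simp: neg1_def)

lemma neg1_diff: "neg1 (a - b) = neg1 a * neg1 b"
  by (auto simp: neg1_def)

lemma neg1_of_nat: "neg1 (int k) = (-1) ^ k"
  by (auto simp: neg1_def even_of_nat_iff)

lemma neg1_sq: "neg1 a * neg1 a = 1"
  by (auto simp: neg1_def)

lemma neg1_nonzero: "neg1 a \<noteq> 0"
  by (auto simp: neg1_def)

lemma Bf_below: "x < e \<Longrightarrow> Bf e g x = 0"
  by (simp add: Bf_def)

lemma Bf_shift: "Bf e g (x + s) = Bf (e - s) g x"
  by (simp add: Bf_def algebra_simps)

lemma mc_nat: "mc c q = of_nat ((q + c - 1) choose q)"
proof -
  have "mc c q = (of_nat q - (- of_nat c) - 1 gchoose q)"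
    unfolding mc_def by (subst gbinomial_negated_upper) (simp flip: power_mult_distrib)
  also have "\<dots> = (of_nat (q + c) - 1 gchoose q)" by simp
  also have "\<dots> = of_nat ((q + c - 1) choose q)"
  proof (cases "q + c = 0")
    case True then show ?thesis by simp
  next
    case False
    then have "1 \<le> q + c" by linarith
    then have e: "(of_nat (q + c) - 1 :: real) = of_nat (q + c - 1)" by (simp add: of_nat_diff)
    show ?thesis by (simp only: e binomial_gbinomial)
  qed
  finally show ?thesis .
qed

lemma mc_0: "mc 0 s = (if s = 0 then 1 else 0)"
  by (cases s) (auto simp: mc_nat)

lemma mc_add_choose: "mc c (q + u) * of_nat ((q + u) choose u) = mc c q * mc (c + q) u"
proof (cases "c = 0")
  case True
  then show ?thesis
    by (cases q; cases u) (auto simp: mc_nat binomial_eq_0)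
next
  case False
  have "((q + u + c - 1) choose (q + u)) * ((q + u) choose u) = ((q + u + c - 1) choose u) * ((q + c - 1) choose q)"
    using choose_mult[of u "q + u" "q + u + c - 1"] False
    by (simp add: ac_simps)
  then have "real ((q + u + c - 1) choose (q + u)) * real ((q + u) choose u) = real ((q + c - 1) choose q) * real ((u + (c + q) - 1) choose u)"
    by (metis (mono_tags, lifting) add.commute add.left_commute mult.commute of_nat_mult)
  then show ?thesis by (simp add: mc_nat)
qed

lemma mc_vandermonde: "mc (a + b) s = (\<Sum>u\<le>s. mc a u * mc b (s - u))"
proof -
  have "(- of_nat (a + b) gchoose s :: real) = (\<Sum>k=0..s. ((- of_nat a) gchoose k) * ((- of_nat b) gchoose (s - k)))"
    using gbinomial_Vandermonde[of "- of_nat a :: real" "- of_nat b" s] by simp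
  then have "mc (a + b) s = (\<Sum>k=0..s. (-1) ^ s * (((- of_nat a) gchoose k) * ((- of_nat b) gchoose (s - k))))"
    unfolding mc_def by (simp add: sum_distrib_left)
  also have "\<dots> = (\<Sum>u\<le>s. mc a u * mc b (s - u))"
    unfolding mc_def atLeast0AtMost
  proof (intro sum.cong refl)
    fix k assume "k \<in> {..s}"
    then have "(-1::real) ^ s = (-1) ^ k * (-1) ^ (s - k)" by (simp flip: power_add)
    then show "(-1::real) ^ s * (((- of_nat a) gchoose k) * ((- of_nat b) gchoose (s - k))) =
          (-1) ^ k * (- of_nat a gchoose k) * ((-1) ^ (s - k) * (- of_nat b gchoose (s - k)))"
      by simp
  qed
  finally show ?thesis .
qed



lemma Bf_expand:
  "Bf E (G + int q) x = (\<Sum>u\<le>q. (-1) ^ u * of_nat (q choose u) * Bf (E + int u) G x)"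
proof (cases "E \<le> x")
  case False then show ?thesis by (simp add: Bf_def)
next
  case True
  define N where "N = nat (x - E)"
  have xN: "x = E + int N" using True by (simp add: N_def)
  define f where "f k = (-1::real) ^ N * (of_nat (q choose k) * (of_int G gchoose (N - k)))" for k
  have "Bf E (G + int q) x = (-1) ^ N * ((of_nat q + of_int G) gchoose N)"
    by (simp add: Bf_def xN add.commute)
  also have "\<dots> = (\<Sum>k\<le>N. f k)"
    unfolding gbinomial_Vandermonde[symmetric] f_def atLeast0AtMost
    by (simp add: sum_distrib_left binomial_gbinomial)
  also have "\<dots> = (\<Sum>k\<le>min q N. f k)"
    by (rule sum.mono_neutral_right) (auto simp: f_def)
  also have "\<dots> = (\<Sum>u\<le>q. (-1) ^ u * of_nat (q choose u) * Bf (E + int u) G x)"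
  proof (rule sum.mono_neutral_cong_left)
    show "\<forall>i\<in>{..q} - {..min q N}. (-1) ^ i * of_nat (q choose i) * Bf (E + int i) G x = 0"
      by (auto simp: Bf_def xN)
    fix u assume u: "u \<in> {..min q N}"
    then have "(-1::real) ^ N = (-1) ^ u * (-1) ^ (N - u)" by (simp flip: power_add)
    moreover have "nat (x - (E + int u)) = N - u" using u by (simp add: xN)
    ultimately show "f u = (-1) ^ u * of_nat (q choose u) * Bf (E + int u) G x"
      using u by (simp add: f_def Bf_def xN)
  qed auto
  finally show ?thesis .
qed

lemma onevar:
  fixes M P K :: nat
  assumes K: "- int P - e \<le> int K"
  shows "(\<Sum>s\<le>K. mc M s * Bf e g (- int P - int s)) =
         neg1 (int P + e) * Bf e (int M - int P - 1 - e - g) (- int P)"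
proof (cases "e \<le> - int P")
  case False then show ?thesis by (simp add: Bf_def)
next
  case True
  define N where "N = nat (- int P - e)"
  have eN: "e = - int P - int N" using True by (simp add: N_def)
  have NK: "N \<le> K" using K by (simp add: N_def)
  define f where "f s = (-1::real) ^ N * (((- of_nat M) gchoose s) * (of_int g gchoose (N - s)))" for s
  have "(\<Sum>s\<le>K. mc M s * Bf e g (- int P - int s)) = (\<Sum>s\<le>N. mc M s * Bf e g (- int P - int s))"
    using NK by (intro sum.mono_neutral_right) (auto simp: Bf_def eN)
  also have "\<dots> = (\<Sum>s\<le>N. f s)"
  proof (intro sum.cong refl)
    fix s assume s: "s \<in> {..N}"
    then have "(-1::real) ^ N = (-1) ^ s * (-1) ^ (N - s)" by (simp flip: power_add)
    moreover have "nat (- int P - int s - e) = N - s" using s by (simp add: eN)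
    ultimately show "mc M s * Bf e g (- int P - int s) = f s"
      using s by (simp add: f_def Bf_def eN mc_def)
  qed
  also have "\<dots> = (-1) ^ N * ((- of_nat M + of_int g) gchoose N)"
    unfolding gbinomial_Vandermonde[symmetric] f_def atLeast0AtMost
    by (simp add: sum_distrib_left)
  also have "\<dots> = (of_nat N - (- of_nat M + of_int g) - 1) gchoose N"
    by (subst gbinomial_negated_upper) simp
  also have "\<dots> = neg1 (int P + e) * Bf e (int M - int P - 1 - e - g) (- int P)"
  proof -
    have "neg1 (int P + e) = (-1) ^ N" by (simp add: eN neg1_uminus neg1_of_nat)
    moreover have "(of_nat N - (- of_nat M + of_int g) - 1 :: real) = of_int (int M - int P - 1 - e - g)"
      by (simp add: eN)
    ultimately show ?thesis
      apply (simp add: Bf_def eN)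
      apply (rule arg_cong[where f="\<lambda>a. a gchoose N"])
      apply simp
      done
  qed
  finally show ?thesis .
qed



lemma Box_reindex:
  fixes g :: "(nat \<Rightarrow> nat) \<Rightarrow> 'b::comm_monoid_add"
  shows "(\<Sum>u\<in>Box (Suc m) K. g u) = (\<Sum>u\<in>Box m K. \<Sum>v\<le>K. g (u(m := v)))"
proof -
  have "(\<Sum>u\<in>Box (Suc m) K. g u) = (\<Sum>uv\<in>Box m K \<times> {..K}. g ((\<lambda>(u, v). u(m := v)) uv))"
    unfolding PZ_Suc by (subst sum.reindex[OF PZ_Suc_inj]) (simp add: comp_def)
  also have "\<dots> = (\<Sum>u\<in>Box m K. \<Sum>v\<le>K. g (u(m := v)))"
    by (simp add: sum.cartesian_product')
  finally show ?thesis .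
qed

lemma conv:
  fixes M :: "nat \<Rightarrow> nat" and h :: "nat \<Rightarrow> real"
  assumes "\<forall>t>K. h t = 0"
  shows "(\<Sum>u\<in>Box m K. (\<Prod>l<m. mc (M l) (u l)) * h (\<Sum>l<m. u l)) = (\<Sum>s\<le>K. mc (\<Sum>l<m. M l) s * h s)"
  using assms
proof (induction m arbitrary: h)
  case 0
  have "(\<Sum>s\<le>K. mc 0 s * h s) = (\<Sum>s\<le>K. (if s = 0 then h s else 0))"
    by (intro sum.cong refl) (simp add: mc_0)
  also have "\<dots> = h 0" by (simp add: sum.delta)
  finally show ?case by (simp add: PZ_0)
next
  case (Suc m)
  let ?M' = "\<Sum>l<m. M l"
  have hv: "\<forall>t>K. h (t + v) = 0" for v using Suc.prems by simp
  have "(\<Sum>u\<in>Box (Suc m) K. (\<Prod>l<Suc m. mc (M l) (u l)) * h (\<Sum>l<Suc m. u l))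
      = (\<Sum>u\<in>Box m K. \<Sum>v\<le>K. (\<Prod>l<Suc m. mc (M l) ((u(m := v)) l)) * h (\<Sum>l<Suc m. (u(m := v)) l))"
    by (rule Box_reindex)
  also have "\<dots> = (\<Sum>u\<in>Box m K. \<Sum>v\<le>K. mc (M m) v * ((\<Prod>l<m. mc (M l) (u l)) * h ((\<Sum>l<m. u l) + v)))"
  proof (intro sum.cong refl)
    fix u v assume "u \<in> Box m K"
    have 1: "(\<Prod>l<m. mc (M l) ((u(m := v)) l)) = (\<Prod>l<m. mc (M l) (u l))"
      by (intro prod.cong) auto
    have 2: "(\<Sum>l<m. (u(m := v)) l) = (\<Sum>l<m. u l)"
      by (intro sum.cong) auto
    show "(\<Prod>l<Suc m. mc (M l) ((u(m := v)) l)) * h (\<Sum>l<Suc m. (u(m := v)) l) =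
          mc (M m) v * ((\<Prod>l<m. mc (M l) (u l)) * h ((\<Sum>l<m. u l) + v))"
      using 1 2 by (simp add: ac_simps)
  qed
  also have "\<dots> = (\<Sum>v\<le>K. mc (M m) v * (\<Sum>u\<in>Box m K. (\<Prod>l<m. mc (M l) (u l)) * h ((\<Sum>l<m. u l) + v)))"
    by (subst sum.swap) (simp add: sum_distrib_left)
  also have "\<dots> = (\<Sum>v\<le>K. mc (M m) v * (\<Sum>s\<le>K. mc ?M' s * h (s + v)))"
    using Suc.IH[OF hv] by simp
  also have "\<dots> = (\<Sum>(v, s)\<in>{..K} \<times> {..K}. mc (M m) v * mc ?M' s * h (v + s))"
    by (simp add: sum.cartesian_product' sum_distrib_left ac_simps)
  also have "\<dots> = (\<Sum>(v, s)\<in>{(i, j). i + j \<le> K}. mc (M m) v * mc ?M' s * h (v + s))"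
    by (rule sum.mono_neutral_right) (use Suc.prems in \<open>auto simp: not_le[symmetric]\<close>)
  also have "\<dots> = (\<Sum>k\<le>K. \<Sum>v\<le>k. mc (M m) v * mc ?M' (k - v) * h k)"
    by (subst sum.triangle_reindex_eq) simp
  also have "\<dots> = (\<Sum>k\<le>K. mc (M m + ?M') k * h k)"
    by (simp add: mc_vandermonde sum_distrib_right)
  finally show ?case by (simp add: add.commute)
qed

lemma Lf_multi:
  fixes X :: "nat \<Rightarrow> nat set" and A :: "nat \<Rightarrow> int"
  assumes fin: "\<And>l. l < n \<Longrightarrow> finite (X l)"
    and low: "\<And>l v x. l < n \<Longrightarrow> v \<in> X l \<Longrightarrow> x < A l \<Longrightarrow> H l v x = 0"
  shows "Lf n c (\<lambda>l x. \<Sum>v\<in>X l. \<alpha> l v * H l v x) =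
         (\<Sum>u\<in>PZ n X. (\<Prod>l<n. \<alpha> l (u l)) * Lf n c (\<lambda>l. H l (u l)))"
proof -
  have "Lf n c (\<lambda>l x. \<Sum>v\<in>X l. \<alpha> l v * H l v x) = PS n c A (\<lambda>l x. \<Sum>v\<in>X l. \<alpha> l v * H l v x)"
    by (rule Lf_PS) (simp add: low)
  also have "\<dots> = (\<Sum>p\<in>Pc n c A. \<Sum>u\<in>PZ n X. (\<Prod>l<n. \<alpha> l (u l)) * (wt n c p * (\<Prod>l<n. H l (u l) (mexp n c p l))))"
    unfolding PS_def trm_def
  proof (intro sum.cong refl)
    fix p
    have "(\<Prod>l<n. \<Sum>v\<in>X l. \<alpha> l v * H l v (mexp n c p l)) = (\<Sum>u\<in>PZ n X. \<Prod>l<n. \<alpha> l (u l) * H l (u l) (mexp n c p l))"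
      by (rule PZ_prod_sum[symmetric]) (rule fin)
    then show "wt n c p * (\<Prod>l<n. \<Sum>v\<in>X l. \<alpha> l v * H l v (mexp n c p l)) =
        (\<Sum>u\<in>PZ n X. (\<Prod>l<n. \<alpha> l (u l)) * (wt n c p * (\<Prod>l<n. H l (u l) (mexp n c p l))))"
      by (simp add: prod.distrib sum_distrib_left ac_simps)
  qed
  also have "\<dots> = (\<Sum>u\<in>PZ n X. (\<Prod>l<n. \<alpha> l (u l)) * PS n c A (\<lambda>l. H l (u l)))"
    unfolding PS_def trm_def by (subst sum.swap) (simp add: sum_distrib_left)
  also have "\<dots> = (\<Sum>u\<in>PZ n X. (\<Prod>l<n. \<alpha> l (u l)) * Lf n c (\<lambda>l. H l (u l)))"
  proof (intro sum.cong refl)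
    fix u assume u: "u \<in> PZ n X"
    have "Lf n c (\<lambda>l. H l (u l)) = PS n c A (\<lambda>l. H l (u l))"
      by (rule Lf_PS) (use u low in \<open>auto simp: PZ_def\<close>)
    then show "(\<Prod>l<n. \<alpha> l (u l)) * PS n c A (\<lambda>l. H l (u l)) = (\<Prod>l<n. \<alpha> l (u l)) * Lf n c (\<lambda>l. H l (u l))"
      by simp
  qed
  finally show ?thesis .
qed



lemma Lf_0: "Lf 0 c F = 1"
  unfolding Lf_def trm_def wt_def Tri_0 by simp

definition tri :: "nat \<Rightarrow> nat" where "tri n = (\<Sum>l<n. l)"

lemma neg1_sum_nat: "neg1 (\<Sum>x\<in>A. int (f x)) = (-1) ^ (sum f A)"
  by (metis of_nat_sum neg1_of_nat)

lemma sum_split_sub: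
  fixes q u :: "nat \<Rightarrow> nat"
  assumes "\<forall>l. u l \<le> q l"
  shows "(\<Sum>l<m. q l - u l) + (\<Sum>l<m. u l) = (\<Sum>l<m. q l)"
  using assms by (simp add: sum.distrib[symmetric])

lemma Box_le: "q \<in> Box m K \<Longrightarrow> q l \<le> K"
  by (cases "l < m") (auto simp: PZ_def)

lemma Box_mem: "(\<forall>l. m \<le> l \<longrightarrow> q l = 0) \<Longrightarrow> (\<Sum>l<m. q l) \<le> K \<Longrightarrow> q \<in> Box m K"
proof -
  assume z: "\<forall>l. m \<le> l \<longrightarrow> q l = 0" and s: "(\<Sum>l<m. q l) \<le> K"
  have "q l \<le> K" if "l < m" for l
  proof -
    have "q l \<le> (\<Sum>l<m. q l)" using that by (intro member_le_sum) auto
    then show ?thesis using s by simp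
  qed
  then show ?thesis using z by (auto simp: PZ_def)
qed



theorem Lf_T:
  "Lf n c (\<lambda>l. Bf (e l) (g l)) = neg1 (\<Sum>l<n. e l) * (-1) ^ (c * tri n) *
     Lf n c (\<lambda>l. Bf (e l) (int c * (int n - 1) - 1 - e l - g l))"
proof (induction n arbitrary: e g)
  case 0 then show ?case by (simp add: Lf_0 tri_def neg1_def)
next
  case (Suc m)
  define K where "K = nat (- e 0)"
  have K: "- e 0 \<le> int K" by (simp add: K_def)
  define E where "E l = e (Suc l) - int c" for l
  define G where "G l = int c * int m - 1 - e (Suc l) - g (Suc l)" for l
  define G0 where "G0 = int c * int m - 1 - e 0 - g 0"
  define wq where "wq q = (\<Prod>j<m. mc c (q j))" for q
  define Phi where "Phi v = Lf m c (\<lambda>l. Bf (E l - int (v l)) (G l))" for v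
  define Phi' where "Phi' q u = Lf m c (\<lambda>l. Bf (E l - int (q l) + int (u l)) (G l))" for q u :: "nat \<Rightarrow> nat"
  define sm where "sm q = neg1 (\<Sum>l<m. (E l - int (q l))) * (-1) ^ (c * tri m)" for q
  define B where "B = Box m K"
  define a where "a q u = wq q * Bf (e 0) (g 0) (- int (\<Sum>j<m. q j)) * sm q *
                      (\<Prod>l<m. (-1) ^ (u l) * of_nat (q l choose u l))" for q u :: "nat \<Rightarrow> nat"
  have finB: "finite B" unfolding B_def by (intro finite_PZ) auto
  have Bf0: "\<And>s. K < s \<Longrightarrow> Bf (e 0) h (- int s) = 0" for h
    by (rule Bf_below) (simp add: K_def)

  have inner: "Lf m c (\<lambda>l. Bf (E l - int (q l)) (g (Suc l))) =
      sm q * (\<Sum>u\<in>B. (\<Prod>l<m. (-1) ^ (u l) * of_nat (q l choose u l)) * Phi' q u)"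
    if q: "q \<in> B" for q
  proof -
    have "Lf m c (\<lambda>l. Bf (E l - int (q l)) (g (Suc l))) =
       sm q * Lf m c (\<lambda>l. Bf (E l - int (q l)) (int c * (int m - 1) - 1 - (E l - int (q l)) - g (Suc l)))"
      using Suc.IH[of "\<lambda>l. E l - int (q l)" "\<lambda>l. g (Suc l)"] by (simp add: sm_def)
    also have "Lf m c (\<lambda>l. Bf (E l - int (q l)) (int c * (int m - 1) - 1 - (E l - int (q l)) - g (Suc l)))
        = Lf m c (\<lambda>l x. \<Sum>u\<in>{..K}. ((-1) ^ u * of_nat (q l choose u)) * Bf (E l - int (q l) + int u) (G l) x)"
    proof (rule Lf_cong)
      fix l x assume l: "l < m"
      have "int c * (int m - 1) - 1 - (E l - int (q l)) - g (Suc l) = G l + int (q l)"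
        by (simp add: E_def G_def algebra_simps)
      have "Bf (E l - int (q l)) (int c * (int m - 1) - 1 - (E l - int (q l)) - g (Suc l)) x
          = (\<Sum>u\<le>q l. (-1) ^ u * of_nat (q l choose u) * Bf (E l - int (q l) + int u) (G l) x)"
        by (subst \<open>int c * (int m - 1) - 1 - (E l - int (q l)) - g (Suc l) = G l + int (q l)\<close>) (rule Bf_expand)
      also have "\<dots> = (\<Sum>u\<in>{..K}. ((-1) ^ u * of_nat (q l choose u)) * Bf (E l - int (q l) + int u) (G l) x)"
        using Box_le[of q m K l] q unfolding B_def
        by (intro sum.mono_neutral_left) auto
      finally show "Bf (E l - int (q l)) (int c * (int m - 1) - 1 - (E l - int (q l)) - g (Suc l)) x
          = (\<Sum>u\<in>{..K}. ((-1) ^ u * of_nat (q l choose u)) * Bf (E l - int (q l) + int u) (G l) x)" .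
    qed
    also have "\<dots> = (\<Sum>u\<in>B. (\<Prod>l<m. (-1) ^ (u l) * of_nat (q l choose u l)) * Phi' q u)"
      unfolding B_def Phi'_def
      by (rule Lf_multi[where A="\<lambda>l. E l - int (q l)"]) (auto simp: Bf_def)
    finally show ?thesis by simp
  qed

  have LHS: "Lf (Suc m) c (\<lambda>l. Bf (e l) (g l)) = (\<Sum>q\<in>B. \<Sum>u\<in>B. a q u * Phi' q u)"
  proof -
    have "Lf (Suc m) c (\<lambda>l. Bf (e l) (g l)) = PS (Suc m) c e (\<lambda>l. Bf (e l) (g l))"
      by (rule Lf_PS) (simp add: Bf_def)
    also have "\<dots> = (\<Sum>q\<in>B. wq q * Bf (e 0) (g 0) (- int (\<Sum>j<m. q j)) *
            PS m c (\<lambda>l. e (Suc l) - int c - int (q l)) (\<lambda>l x. Bf (e (Suc l)) (g (Suc l)) (x + int c + int (q l))))"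
      unfolding B_def wq_def by (rule PS_Suc[where A=e and K=K, OF K]) (simp add: Bf_def)
    also have "\<dots> = (\<Sum>q\<in>B. wq q * Bf (e 0) (g 0) (- int (\<Sum>j<m. q j)) *
            Lf m c (\<lambda>l. Bf (E l - int (q l)) (g (Suc l))))"
    proof (intro sum.cong refl)
      fix q
      have "Lf m c (\<lambda>l. Bf (E l - int (q l)) (g (Suc l))) = PS m c (\<lambda>l. e (Suc l) - int c - int (q l)) (\<lambda>l. Bf (E l - int (q l)) (g (Suc l)))"
        by (rule Lf_PS) (simp add: Bf_def E_def)
      also have "\<dots> = PS m c (\<lambda>l. e (Suc l) - int c - int (q l)) (\<lambda>l x. Bf (e (Suc l)) (g (Suc l)) (x + int c + int (q l)))"
        by (rule PS_cong) (simp add: E_def Bf_def algebra_simps)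
      finally show "wq q * Bf (e 0) (g 0) (- int (\<Sum>j<m. q j)) *
            PS m c (\<lambda>l. e (Suc l) - int c - int (q l)) (\<lambda>l x. Bf (e (Suc l)) (g (Suc l)) (x + int c + int (q l))) =
          wq q * Bf (e 0) (g 0) (- int (\<Sum>j<m. q j)) * Lf m c (\<lambda>l. Bf (E l - int (q l)) (g (Suc l)))"
        by simp
    qed
    also have "\<dots> = (\<Sum>q\<in>B. \<Sum>u\<in>B. a q u * Phi' q u)"
      by (intro sum.cong refl) (simp add: inner a_def sum_distrib_left ac_simps)
    finally show ?thesis .
  qed

  have RHS: "Lf (Suc m) c (\<lambda>l. Bf (e l) (int c * (int (Suc m) - 1) - 1 - e l - g l)) =
       (\<Sum>q\<in>B. wq q * Bf (e 0) G0 (- int (\<Sum>j<m. q j)) * Phi q)"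
  proof -
    have "Lf (Suc m) c (\<lambda>l. Bf (e l) (int c * (int (Suc m) - 1) - 1 - e l - g l))
        = PS (Suc m) c e (\<lambda>l. Bf (e l) (int c * (int (Suc m) - 1) - 1 - e l - g l))"
      by (rule Lf_PS) (simp add: Bf_def)
    also have "\<dots> = (\<Sum>q\<in>B. wq q * Bf (e 0) G0 (- int (\<Sum>j<m. q j)) *
            PS m c (\<lambda>l. e (Suc l) - int c - int (q l))
              (\<lambda>l x. Bf (e (Suc l)) (int c * (int (Suc m) - 1) - 1 - e (Suc l) - g (Suc l)) (x + int c + int (q l))))"
      unfolding B_def wq_def G0_def by (subst PS_Suc[where A=e and K=K, OF K]) (simp_all add: Bf_def)
    also have "\<dots> = (\<Sum>q\<in>B. wq q * Bf (e 0) G0 (- int (\<Sum>j<m. q j)) * Phi q)"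
    proof (intro sum.cong refl)
      fix q
      have "Phi q = PS m c (\<lambda>l. e (Suc l) - int c - int (q l)) (\<lambda>l. Bf (E l - int (q l)) (G l))"
        unfolding Phi_def by (rule Lf_PS) (simp add: Bf_def E_def)
      also have "\<dots> = PS m c (\<lambda>l. e (Suc l) - int c - int (q l))
              (\<lambda>l x. Bf (e (Suc l)) (int c * (int (Suc m) - 1) - 1 - e (Suc l) - g (Suc l)) (x + int c + int (q l)))"
        by (rule PS_cong) (simp add: E_def G_def Bf_def algebra_simps)
      finally show "wq q * Bf (e 0) G0 (- int (\<Sum>j<m. q j)) *
            PS m c (\<lambda>l. e (Suc l) - int c - int (q l))
              (\<lambda>l x. Bf (e (Suc l)) (int c * (int (Suc m) - 1) - 1 - e (Suc l) - g (Suc l)) (x + int c + int (q l))) =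
          wq q * Bf (e 0) G0 (- int (\<Sum>j<m. q j)) * Phi q"
        by simp
    qed
    finally show ?thesis .
  qed

  define sgn where "sgn = neg1 (\<Sum>l<Suc m. e l) * (-1) ^ (c * tri (Suc m))"
  define Z where "Z = {(q, u). q \<in> B \<and> u \<in> B \<and> (\<forall>l. u l \<le> q l) \<and> (\<Sum>j<m. q j) \<le> K}"
  define Z' where "Z' = {(q, u). q \<in> B \<and> u \<in> B \<and> (\<Sum>j<m. q j) + (\<Sum>j<m. u j) \<le> K}"
  have Bz: "q \<in> B \<Longrightarrow> m \<le> l \<Longrightarrow> q l = 0" for q l by (simp add: B_def PZ_def)

  have S1: "(\<Sum>q\<in>B. \<Sum>u\<in>B. a q u * Phi' q u) = (\<Sum>(q, u)\<in>Z. a q u * Phi (\<lambda>l. q l - u l))"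
    unfolding sum.cartesian_product
  proof (rule sum.mono_neutral_cong_right)
    show "finite (B \<times> B)" using finB by simp
    show "Z \<subseteq> B \<times> B" by (auto simp: Z_def)
    show "\<forall>x\<in>B \<times> B - Z. (case x of (q, u) \<Rightarrow> a q u * Phi' q u) = 0"
    proof (clarify)
      fix q u assume q: "q \<in> B" and u: "u \<in> B" and nZ: "(q, u) \<notin> Z"
      show "a q u * Phi' q u = 0"
      proof (cases "\<forall>l. u l \<le> q l")
        case True
        then have "K < (\<Sum>j<m. q j)" using nZ q u by (auto simp: Z_def)
        then show ?thesis by (simp add: a_def Bf0 del: of_nat_sum)
      next
        case False
        then obtain l where l: "q l < u l" by (auto simp: not_le)
        then have "l < m" using Bz[OF q] Bz[OF u] by (metis not_le less_nat_zero_code)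
        then have "(\<Prod>l<m. (-1::real) ^ (u l) * of_nat (q l choose u l)) = 0"
          using l by (intro prod_zero) auto
        then show ?thesis by (simp add: a_def)
      qed
    qed
    fix x assume "x \<in> Z"
    then obtain q u where x: "x = (q, u)" and le: "\<forall>l. u l \<le> q l" by (auto simp: Z_def)
    have "Phi' q u = Phi (\<lambda>l. q l - u l)"
      unfolding Phi'_def Phi_def by (rule Lf_cong) (simp add: le of_nat_diff algebra_simps)
    then show "(case x of (q, u) \<Rightarrow> a q u * Phi' q u) = (case x of (q, u) \<Rightarrow> a q u * Phi (\<lambda>l. q l - u l))"
      by (simp add: x)
  qed

  have S2: "(\<Sum>(q, u)\<in>Z. a q u * Phi (\<lambda>l. q l - u l)) = (\<Sum>(q, u)\<in>Z'. a (\<lambda>l. q l + u l) u * Phi q)"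
  proof (rule sum.reindex_bij_witness[where j="\<lambda>(q, u). (\<lambda>l. q l - u l, u)" and i="\<lambda>(q, u). (\<lambda>l. q l + u l, u)"])
    fix x assume "x \<in> Z"
    then obtain q u where x: "x = (q, u)" and q: "q \<in> B" and u: "u \<in> B" and le: "\<forall>l. u l \<le> q l"
      and s: "(\<Sum>j<m. q j) \<le> K" by (auto simp: Z_def)
    show "(\<lambda>(q, u). (\<lambda>l. q l + u l, u)) ((\<lambda>(q, u). (\<lambda>l. q l - u l, u)) x) = x"
      using le by (simp add: x)
    have ss: "(\<Sum>j<m. q j - u j) + (\<Sum>j<m. u j) = (\<Sum>j<m. q j)" by (rule sum_split_sub[OF le])
    have "(\<lambda>l. q l - u l) \<in> B" unfolding B_def
      by (rule Box_mem) (use Bz[OF q] ss s in auto)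
    then show "(\<lambda>(q, u). (\<lambda>l. q l - u l, u)) x \<in> Z'"
      using u ss s by (simp add: x Z'_def)
    show "(case (\<lambda>(q, u). (\<lambda>l. q l - u l, u)) x of (q, u) \<Rightarrow> a (\<lambda>l. q l + u l) u * Phi q) =
          (case x of (q, u) \<Rightarrow> a q u * Phi (\<lambda>l. q l - u l))"
      using le by (simp add: x)
  next
    fix y assume "y \<in> Z'"
    then obtain q u where y: "y = (q, u)" and q: "q \<in> B" and u: "u \<in> B"
      and s: "(\<Sum>j<m. q j) + (\<Sum>j<m. u j) \<le> K" by (auto simp: Z'_def)
    show "(\<lambda>(q, u). (\<lambda>l. q l - u l, u)) ((\<lambda>(q, u). (\<lambda>l. q l + u l, u)) y) = y"
      by (simp add: y)
    have ss: "(\<Sum>j<m. q j + u j) = (\<Sum>j<m. q j) + (\<Sum>j<m. u j)" by (simp add: sum.distrib)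
    have "(\<lambda>l. q l + u l) \<in> B" unfolding B_def
      by (rule Box_mem) (use Bz[OF q] Bz[OF u] ss s in auto)
    then show "(\<lambda>(q, u). (\<lambda>l. q l + u l, u)) y \<in> Z"
      using u ss s by (simp add: y Z_def)
  qed

  have S3: "(\<Sum>(q, u)\<in>Z'. a (\<lambda>l. q l + u l) u * Phi q) = (\<Sum>q\<in>B. Phi q * (\<Sum>u\<in>B. a (\<lambda>l. q l + u l) u))"
  proof -
    have "(\<Sum>(q, u)\<in>Z'. a (\<lambda>l. q l + u l) u * Phi q) = (\<Sum>(q, u)\<in>B \<times> B. a (\<lambda>l. q l + u l) u * Phi q)"
    proof (rule sum.mono_neutral_left)
      show "finite (B \<times> B)" using finB by simp
      show "Z' \<subseteq> B \<times> B" by (auto simp: Z'_def)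
      show "\<forall>x\<in>B \<times> B - Z'. (case x of (q, u) \<Rightarrow> a (\<lambda>l. q l + u l) u * Phi q) = 0"
      proof clarify
        fix q u assume "q \<in> B" "u \<in> B" "(q, u) \<notin> Z'"
        then have "K < (\<Sum>j<m. q j + u j)" by (auto simp: Z'_def sum.distrib)
        then show "a (\<lambda>l. q l + u l) u * Phi q = 0" by (simp add: a_def Bf0 del: of_nat_sum)
      qed
    qed
    also have "\<dots> = (\<Sum>q\<in>B. Phi q * (\<Sum>u\<in>B. a (\<lambda>l. q l + u l) u))"
      by (simp add: sum.cartesian_product' sum_distrib_left ac_simps)
    finally show ?thesis .
  qed

  have S5: "(\<Sum>u\<in>B. a (\<lambda>l. q l + u l) u) = sgn * (wq q * Bf (e 0) G0 (- int (\<Sum>j<m. q j)))"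
    if q: "q \<in> B" for q
  proof -
    define P where "P = (\<Sum>j<m. q j)"
    define h where "h t = Bf (e 0) (g 0) (- int P - int t)" for t
    have h0: "\<forall>t>K. h t = 0" unfolding h_def by (auto intro!: Bf_below simp: K_def)
    have a_eq: "a (\<lambda>l. q l + u l) u = (wq q * sm q) * ((\<Prod>l<m. mc (c + q l) (u l)) * h (\<Sum>l<m. u l))" for u
    proof -
      have i: "wq (\<lambda>l. q l + u l) * (\<Prod>l<m. of_nat ((q l + u l) choose u l)) = wq q * (\<Prod>l<m. mc (c + q l) (u l))"
        unfolding wq_def prod.distrib[symmetric] by (intro prod.cong refl) (rule mc_add_choose)
      have "(\<Sum>l<m. E l - int (q l + u l)) = (\<Sum>l<m. E l - int (q l)) - int (\<Sum>l<m. u l)"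
        by (simp add: sum_subtractf sum.distrib of_nat_sum)
      then have "sm (\<lambda>l. q l + u l) = sm q * (-1) ^ (\<Sum>l<m. u l)"
        unfolding sm_def by (simp add: neg1_diff neg1_of_nat neg1_sum_nat)
      moreover have "(\<Prod>l<m. (-1::real) ^ (u l)) = (-1) ^ (\<Sum>l<m. u l)" by (simp add: power_sum)
      ultimately have ii: "sm (\<lambda>l. q l + u l) * (\<Prod>l<m. (-1::real) ^ (u l)) = sm q"
        by (simp add: mult.assoc flip: power_mult_distrib)
      have iii: "Bf (e 0) (g 0) (- int (\<Sum>j<m. q j + u j)) = h (\<Sum>l<m. u l)"
        by (simp add: h_def P_def sum.distrib)
      show ?thesis
        unfolding a_def iii prod.distrib
        using i ii by (simp add: ac_simps)
    qed
    have "(\<Sum>u\<in>B. a (\<lambda>l. q l + u l) u) = (wq q * sm q) * (\<Sum>u\<in>B. (\<Prod>l<m. mc (c + q l) (u l)) * h (\<Sum>l<m. u l))"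
      by (simp add: a_eq sum_distrib_left)
    also have "(\<Sum>u\<in>B. (\<Prod>l<m. mc (c + q l) (u l)) * h (\<Sum>l<m. u l)) = (\<Sum>s\<le>K. mc (\<Sum>l<m. c + q l) s * h s)"
      unfolding B_def by (rule conv[OF h0])
    also have "(\<Sum>l<m. c + q l) = c * m + P" by (simp add: P_def sum.distrib)
    also have "(\<Sum>s\<le>K. mc (c * m + P) s * h s) = neg1 (int P + e 0) * Bf (e 0) G0 (- int P)"
    proof -
      have "(\<Sum>s\<le>K. mc (c * m + P) s * h s) = neg1 (int P + e 0) * Bf (e 0) (int (c * m + P) - int P - 1 - e 0 - g 0) (- int P)"
        unfolding h_def by (rule onevar) (simp add: K_def)
      then show ?thesis by (simp add: G0_def)
    qed
    also have "wq q * sm q * (neg1 (int P + e 0) * Bf (e 0) G0 (- int P)) = sgn * (wq q * Bf (e 0) G0 (- int P))"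
    proof -
      have "(\<Sum>l<m. E l - int (q l)) = (\<Sum>l<m. e (Suc l)) - int c * int m - int P"
        by (simp add: E_def P_def sum_subtractf of_nat_sum)
      then have "sm q * neg1 (int P + e 0) = neg1 ((\<Sum>l<m. e (Suc l)) + e 0 - int (c * m) - int P + int P) * (-1) ^ (c * tri m)"
        unfolding sm_def by (simp add: neg1_add neg1_diff neg1_sq ac_simps)
      also have "\<dots> = neg1 (\<Sum>l<Suc m. e l) * (-1) ^ (c * m) * (-1) ^ (c * tri m)"
      proof -
        have "(\<Sum>l<Suc m. e l) = e 0 + (\<Sum>l<m. e (Suc l))" by (rule sum.lessThan_Suc_shift)
        moreover have "neg1 (int c * int m) = (-1) ^ (c * m)" using neg1_of_nat[of "c * m"] by simp
        ultimately show ?thesis by (simp add: neg1_diff add_diff_eq add.commute)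
      qed
      also have "\<dots> = sgn"
        by (simp add: sgn_def tri_def power_add distrib_left)
      finally show ?thesis by (simp add: ac_simps)
    qed
    finally show ?thesis by (simp add: P_def)
  qed

  have "Lf (Suc m) c (\<lambda>l. Bf (e l) (g l)) = (\<Sum>q\<in>B. Phi q * (sgn * (wq q * Bf (e 0) G0 (- int (\<Sum>j<m. q j)))))"
    unfolding LHS S1 S2 S3 by (intro sum.cong refl) (simp add: S5)
  also have "\<dots> = sgn * Lf (Suc m) c (\<lambda>l. Bf (e l) (int c * (int (Suc m) - 1) - 1 - e l - g l))"
    unfolding RHS by (simp add: sum_distrib_left ac_simps)
  finally show ?case by (simp add: sgn_def)
qed



definition rho :: "nat \<Rightarrow> (nat \<Rightarrow> nat \<Rightarrow> nat) \<Rightarrow> nat \<Rightarrow> nat \<Rightarrow> nat" where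
  "rho n p = (\<lambda>i j. if i < j \<and> j < n then p (n - 1 - j) (n - 1 - i) else 0)"

lemma rho_Tri: "rho n p \<in> Tri n"
  by (simp add: rho_def Tri_def)

lemma rho_rho: "p \<in> Tri n \<Longrightarrow> rho n (rho n p) = p"
  unfolding rho_def Tri_def by (intro ext) auto

lemma wt_prod_pairs: "wt n c p = (\<Prod>(i, j)\<in>{(i, j). i < j \<and> j < n}. mc c (p i j))"
proof -
  have "(\<Prod>(i, j)\<in>{(i, j). i < j \<and> j < n}. mc c (p i j)) = (\<Prod>(j, i)\<in>(SIGMA j:{..<n}. {..<j}). mc c (p i j))"
    by (rule prod.reindex_bij_witness[where i="\<lambda>(j, i). (i, j)" and j="\<lambda>(i, j). (j, i)"]) auto
  also have "\<dots> = wt n c p" unfolding wt_def by (simp add: prod.Sigma)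
  finally show ?thesis by simp
qed

lemma wt_rho: "wt n c (rho n p) = wt n c p"
  unfolding wt_prod_pairs
  apply (rule prod.reindex_bij_witness[where i="\<lambda>(i, j). (n - 1 - j, n - 1 - i)" and j="\<lambda>(i, j). (n - 1 - j, n - 1 - i)"])
  apply (auto simp: rho_def split: prod.splits)
  done

lemma mexp_rho:
  assumes l: "l < n"
  shows "mexp n c (rho n p) l = int c * (int n - 1) - mexp n c p (n - 1 - l)"
proof -
  define l0 where "l0 = n - 1 - l"
  have 1: "(\<Sum>i<l. int c + int (rho n p i l)) = int c * int l + (\<Sum>j\<in>{l0<..<n}. int (p l0 j))"
  proof -
    have "(\<Sum>i<l. int (rho n p i l)) = (\<Sum>j\<in>{l0<..<n}. int (p l0 j))"
      apply (rule sum.reindex_bij_witness[where i="\<lambda>j. n - 1 - j" and j="\<lambda>i. n - 1 - i"])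
      using l apply (simp_all add: l0_def)
      apply linarith+
      apply (simp add: rho_def)
      done
    then show ?thesis by (simp add: sum.distrib)
  qed
  have 2: "(\<Sum>j\<in>{l<..<n}. int (rho n p l j)) = (\<Sum>i<l0. int (p i l0))"
    apply (rule sum.reindex_bij_witness[where i="\<lambda>j. n - 1 - j" and j="\<lambda>i. n - 1 - i"])
    using l apply (simp_all add: l0_def)
    apply linarith+
    apply (simp add: rho_def)
    done
  have "mexp n c p l0 = int c * int l0 + (\<Sum>i<l0. int (p i l0)) - (\<Sum>j\<in>{l0<..<n}. int (p l0 j))"
    by (simp add: mexp_def sum.distrib)
  moreover have "int l + int l0 = int n - 1" using l by (simp add: l0_def)
  moreover have e3: "int c * (int n - 1) = int c * int l + int c * int l0"
    using \<open>int l + int l0 = int n - 1\<close> by (metis distrib_left)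
  moreover have "mexp n c (rho n p) l = int c * int l + (\<Sum>j\<in>{l0<..<n}. int (p l0 j)) - (\<Sum>i<l0. int (p i l0))"
    unfolding mexp_def 1 2 by simp
  ultimately have "mexp n c (rho n p) l = int c * (int n - 1) - mexp n c p l0" by linarith
  then show ?thesis by (simp add: l0_def)
qed


lemma trm_rho:
  assumes "p \<in> Tri n"
  shows "trm n c (\<lambda>l x. F (n - 1 - l) (int c * (int n - 1) - x)) (rho n p) = trm n c F p"
proof -
  have "(\<Prod>l<n. F (n - 1 - l) (int c * (int n - 1) - mexp n c (rho n p) l)) = (\<Prod>l<n. F (n - 1 - l) (mexp n c p (n - 1 - l)))"
    by (intro prod.cong refl) (simp add: mexp_rho)
  also have "\<dots> = (\<Prod>l<n. F l (mexp n c p l))"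
    using prod.nat_diff_reindex[of "\<lambda>l. F l (mexp n c p l)" n] by simp
  finally show ?thesis unfolding trm_def wt_rho by simp
qed

theorem Lf_R: "Lf n c F = Lf n c (\<lambda>l x. F (n - 1 - l) (int c * (int n - 1) - x))"
proof -
  let ?F' = "\<lambda>l x. F (n - 1 - l) (int c * (int n - 1) - x)"
  have inj: "inj_on (rho n) (Tri n)" by (metis inj_on_inverseI rho_rho)
  have im: "{p \<in> Tri n. trm n c ?F' p \<noteq> 0} = rho n ` {p \<in> Tri n. trm n c F p \<noteq> 0}"
  proof (rule set_eqI, rule iffI)
    fix p assume p: "p \<in> {p \<in> Tri n. trm n c ?F' p \<noteq> 0}"
    then have "rho n p \<in> {p \<in> Tri n. trm n c F p \<noteq> 0}"
      using trm_rho[of p n c F] rho_rho[of p n] rho_Tri[of n p] trm_rho[of "rho n p" n c F] by auto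
    moreover have "p = rho n (rho n p)" using p rho_rho by auto
    ultimately show "p \<in> rho n ` {p \<in> Tri n. trm n c F p \<noteq> 0}" by blast
  next
    fix p assume "p \<in> rho n ` {p \<in> Tri n. trm n c F p \<noteq> 0}"
    then show "p \<in> {p \<in> Tri n. trm n c ?F' p \<noteq> 0}"
      using trm_rho rho_Tri by auto
  qed
  have "Lf n c ?F' = (\<Sum>p\<in>{p \<in> Tri n. trm n c F p \<noteq> 0}. trm n c ?F' (rho n p))"
    unfolding Lf_def im by (subst sum.reindex) (auto intro: inj_on_subset[OF inj])
  also have "\<dots> = Lf n c F"
    unfolding Lf_def
  proof (intro sum.cong refl)
    fix p assume "p \<in> {p \<in> Tri n. trm n c F p \<noteq> 0}"
    then show "trm n c ?F' (rho n p) = trm n c F p" by (intro trm_rho) simp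
  qed
  finally show ?thesis by simp
qed

lemma Lf_scale:
  assumes "\<And>l. l < n \<Longrightarrow> \<kappa> l \<noteq> 0"
  shows "Lf n c (\<lambda>l x. \<kappa> l * G l x) = (\<Prod>l<n. \<kappa> l) * Lf n c G"
proof -
  have t: "trm n c (\<lambda>l x. \<kappa> l * G l x) p = (\<Prod>l<n. \<kappa> l) * trm n c G p" for p
    unfolding trm_def by (simp add: prod.distrib ac_simps)
  have nz: "(\<Prod>l<n. \<kappa> l) \<noteq> 0" using assms by simp
  show ?thesis unfolding Lf_def t using nz by (simp add: sum_distrib_left)
qed

lemma Bf_refl: "Bf e (int d) (C - x) = (-1) ^ d * Bf (C - e - int d) (int d) x"
proof -
  define k where "k = C - x - e"
  consider "k < 0" | "int d < k" | "0 \<le> k \<and> k \<le> int d" by linarith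
  then show ?thesis
  proof cases
    case 1
    then have "nat (x - (C - e - int d)) > d" by (simp add: k_def)
    then show ?thesis using 1 by (simp add: Bf_def k_def binomial_gbinomial[symmetric] binomial_eq_0)
  next
    case 2
    then have "nat (C - x - e) > d" by (simp add: k_def)
    then show ?thesis using 2 by (simp add: Bf_def k_def binomial_gbinomial[symmetric] binomial_eq_0)
  next
    case 3
    define kk where "kk = nat k"
    have kk: "k = int kk" "kk \<le> d" using 3 by (auto simp: kk_def)
    have a1: "nat (C - x - e) = kk" using kk by (simp add: k_def)
    have a2: "nat (x - (C - e - int d)) = d - kk" using kk by (simp add: k_def)
    have "(-1::real) ^ kk = (-1) ^ d * (-1) ^ (d - kk)"
    proof -
      have "d = kk + (d - kk)" using kk(2) by simp
      then have "(-1::real) ^ d = (-1) ^ kk * (-1) ^ (d - kk)" by (metis power_add)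
      then show ?thesis by (simp add: mult.assoc flip: power_mult_distrib)
    qed
    moreover have "(d choose kk) = (d choose (d - kk))" using kk(2) by (rule binomial_symmetric)
    ultimately show ?thesis using 3 kk
      by (simp add: Bf_def k_def a1 a2 binomial_gbinomial[symmetric])
  qed
qed




definition Cb :: "int \<Rightarrow> nat \<Rightarrow> real" where
  "Cb b r = (-1) ^ r * ((- of_int b :: real) gchoose r)"

lemma F0_val: "1 - a \<le> x \<Longrightarrow> Bf (1 - a) (- b) x = Cb b (nat (x + a - 1))"
  by (simp add: Bf_def Cb_def algebra_simps)

lemma F1_val:
  assumes "1 - a \<le> x"
  shows "Bf (2 - a) (- b - 1) x = (\<Sum>v\<in>{1..nat (x + a - 1)}. Cb b (nat (x + a - 1) - v))"
proof -
  define N where "N = nat (x + a - 1)"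
  show ?thesis
  proof (cases "N = 0")
    case True
    then have "x < 2 - a" using assms by (simp add: N_def)
    then show ?thesis using True by (simp add: Bf_def N_def[symmetric])
  next
    case False
    then have xN: "x = 1 - a + int N" using assms by (simp add: N_def)
    have "(\<Sum>v\<in>{1..N}. Cb b (N - v)) = (\<Sum>r\<le>N - 1. Cb b r)"
      apply (rule sum.reindex_bij_witness[where i="\<lambda>r. N - r" and j="\<lambda>v. N - v"])
      using False by auto
    also have "\<dots> = (\<Sum>r\<le>N - 1. ((- of_int b :: real) gchoose r) * (-1) ^ r)"
      by (simp add: Cb_def mult.commute)
    also have "\<dots> = (-1) ^ (N - 1) * ((- of_int b - 1) gchoose (N - 1))"
      by (rule gbinomial_sum_lower_neg)
    also have "\<dots> = Bf (2 - a) (- b - 1) x"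
    proof -
      have "nat (x - (2 - a)) = N - 1" using False by (simp add: xN)
      then show ?thesis using False by (simp add: Bf_def xN)
    qed
    finally show ?thesis by (simp add: N_def)
  qed
qed

lemma Psi_alt:
  "Psi n k a b c = (\<Sum>(r, s, p)\<in>Psi_terms n k a c. (\<Prod>i<n. Cb b (r i)) * wt n c p)"
  unfolding Psi_def Cb_def wt_def mc_def by simp



definition RS :: "nat \<Rightarrow> nat \<Rightarrow> int \<Rightarrow> nat \<Rightarrow> (nat \<Rightarrow> nat \<Rightarrow> nat) \<Rightarrow> ((nat \<Rightarrow> nat) \<times> (nat \<Rightarrow> nat)) set" where
  "RS n k a c p = {(r, s). (\<forall>i. n \<le> i \<longrightarrow> r i = 0 \<and> s i = 0) \<and> card {i \<in> {..<n}. s i > 0} = k \<and>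
       (\<forall>l<n. int (r l) + int (s l) = mexp n c p l + a - 1)}"

lemma Psi_terms_eq:
  "Psi_terms n k a c = (\<lambda>(p, (r, s)). (r, s, p)) ` (SIGMA p:Pc n c (\<lambda>_. 1 - a). RS n k a c p)"
proof (rule set_eqI, rule iffI)
  fix x assume x: "x \<in> Psi_terms n k a c"
  obtain r s p where xe: "x = (r, s, p)" by (cases x) auto
  have eq: "\<forall>l<n. int (r l) + int (s l) = mexp n c p l + a - 1"
    using x unfolding xe Psi_terms_def mexp_def by (auto simp: algebra_simps)
  have "p \<in> Pc n c (\<lambda>_. 1 - a)"
    using x eq unfolding xe Psi_terms_def Pc_def Tri_def by force
  moreover have "(r, s) \<in> RS n k a c p"
    using x eq unfolding xe Psi_terms_def RS_def by auto
  ultimately show "x \<in> (\<lambda>(p, (r, s)). (r, s, p)) ` (SIGMA p:Pc n c (\<lambda>_. 1 - a). RS n k a c p)"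
    unfolding xe by force
next
  fix x assume "x \<in> (\<lambda>(p, (r, s)). (r, s, p)) ` (SIGMA p:Pc n c (\<lambda>_. 1 - a). RS n k a c p)"
  then obtain r s p where xe: "x = (r, s, p)" and p: "p \<in> Pc n c (\<lambda>_. 1 - a)" and rs: "(r, s) \<in> RS n k a c p"
    by auto
  show "x \<in> Psi_terms n k a c"
    using p rs unfolding xe Psi_terms_def Pc_def Tri_def RS_def mexp_def by (auto simp: algebra_simps)
qed

lemma Psi_terms_inj: "inj_on (\<lambda>(p, (r, s)). (r, s, p)) X"
  by (auto simp: inj_on_def)

lemma RS_eq:
  fixes n k c :: nat and a :: int and p :: "nat \<Rightarrow> nat \<Rightarrow> nat"
  defines "N \<equiv> \<lambda>l. nat (mexp n c p l + a - 1)"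
  assumes p: "p \<in> Pc n c (\<lambda>_. 1 - a)"
  shows "RS n k a c p = (\<lambda>s. (\<lambda>l. if l < n then N l - s l else 0, s)) `
           {s \<in> PZ n (\<lambda>l. {..N l}). card {i \<in> {..<n}. s i > 0} = k}"
proof (rule set_eqI, rule iffI)
  have pl: "\<forall>l<n. 1 - a \<le> mexp n c p l" using p by (simp add: Pc_def)
  fix x assume x: "x \<in> RS n k a c p"
  obtain r s where xe: "x = (r, s)" by (cases x)
  have sN: "\<forall>l<n. s l \<le> N l \<and> r l = N l - s l"
  proof (intro allI impI)
    fix l assume "l < n"
    then have "int (r l) + int (s l) = mexp n c p l + a - 1" using x by (simp add: xe RS_def)
    then show "s l \<le> N l \<and> r l = N l - s l" by (simp add: N_def) linarith
  qed
  have "r = (\<lambda>l. if l < n then N l - s l else 0)"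
    using sN x by (auto simp: xe RS_def)
  moreover have "s \<in> {s \<in> PZ n (\<lambda>l. {..N l}). card {i \<in> {..<n}. s i > 0} = k}"
    using sN x by (auto simp: xe RS_def PZ_def)
  ultimately show "x \<in> (\<lambda>s. (\<lambda>l. if l < n then N l - s l else 0, s)) `
           {s \<in> PZ n (\<lambda>l. {..N l}). card {i \<in> {..<n}. s i > 0} = k}"
    unfolding xe by blast
next
  have pl: "\<forall>l<n. 1 - a \<le> mexp n c p l" using p by (simp add: Pc_def)
  fix x assume "x \<in> (\<lambda>s. (\<lambda>l. if l < n then N l - s l else 0, s)) `
           {s \<in> PZ n (\<lambda>l. {..N l}). card {i \<in> {..<n}. s i > 0} = k}"
  then obtain s where xe: "x = (\<lambda>l. if l < n then N l - s l else 0, s)" and s: "s \<in> PZ n (\<lambda>l. {..N l})"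
    and ck: "card {i \<in> {..<n}. s i > 0} = k" by auto
  have "\<forall>l<n. int (N l - s l) + int (s l) = mexp n c p l + a - 1"
  proof (intro allI impI)
    fix l assume l: "l < n"
    then have "s l \<le> N l" using s by (simp add: PZ_def)
    moreover have h: "1 - a \<le> mexp n c p l" using pl l by simp
    ultimately show "int (N l - s l) + int (s l) = mexp n c p l + a - 1"
      by (simp add: N_def of_nat_diff)
  qed
  then show "x \<in> RS n k a c p"
    using s ck unfolding xe RS_def PZ_def by auto
qed


lemma RS_sum:
  fixes n k c :: nat and a b :: int and p :: "nat \<Rightarrow> nat \<Rightarrow> nat"
  assumes p: "p \<in> Pc n c (\<lambda>_. 1 - a)"
  shows "(\<Sum>(r, s)\<in>RS n k a c p. \<Prod>i<n. Cb b (r i)) =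
    (\<Sum>S\<in>{S. S \<subseteq> {..<n} \<and> card S = k}. \<Prod>l<n. (if l \<in> S then Bf (2 - a) (- b - 1) else Bf (1 - a) (- b)) (mexp n c p l))"
proof -
  define N where "N = (\<lambda>l. nat (mexp n c p l + a - 1))"
  define T where "T = {s \<in> PZ n (\<lambda>l. {..N l}). card {i \<in> {..<n}. s i > 0} = k}"
  define SS where "SS = {S. S \<subseteq> {..<n} \<and> card S = k}"
  define XS where "XS S = (\<lambda>l. if l \<in> S then {1..N l} else {0::nat})" for S
  have pl: "\<forall>l<n. 1 - a \<le> mexp n c p l" using p by (simp add: Pc_def)
  have "(\<Sum>(r, s)\<in>RS n k a c p. \<Prod>i<n. Cb b (r i)) = (\<Sum>s\<in>T. \<Prod>i<n. Cb b (N i - s i))"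
    unfolding RS_eq[OF p]
    by (subst sum.reindex) (auto simp: inj_on_def T_def N_def intro!: prod.cong)
  also have "T = (\<Union>S\<in>SS. PZ n (XS S))"
  proof (rule set_eqI, rule iffI)
    fix s assume s: "s \<in> T"
    define S where "S = {i \<in> {..<n}. s i > 0}"
    have "S \<in> SS" using s by (auto simp: S_def SS_def T_def)
    moreover have "s \<in> PZ n (XS S)"
      using s by (auto simp: S_def XS_def T_def PZ_def)
    ultimately show "s \<in> (\<Union>S\<in>SS. PZ n (XS S))" by blast
  next
    fix s assume "s \<in> (\<Union>S\<in>SS. PZ n (XS S))"
    then obtain S where S: "S \<in> SS" and s: "s \<in> PZ n (XS S)" by blast
    have "{i \<in> {..<n}. s i > 0} = S"
    proof (rule set_eqI)
      fix i show "i \<in> {i \<in> {..<n}. s i > 0} \<longleftrightarrow> i \<in> S"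
      proof (cases "i < n")
        case True
        then have "s i \<in> XS S i" using s by (simp add: PZ_def)
        then show ?thesis using True by (auto simp: XS_def split: if_splits)
      next
        case False then show ?thesis using S by (auto simp: SS_def)
      qed
    qed
    moreover have "s \<in> PZ n (\<lambda>l. {..N l})"
      using s by (auto simp: XS_def PZ_def split: if_splits)
    ultimately show "s \<in> T" using S by (simp add: T_def SS_def)
  qed
  also have "(\<Sum>s\<in>(\<Union>S\<in>SS. PZ n (XS S)). \<Prod>i<n. Cb b (N i - s i)) =
      (\<Sum>S\<in>SS. \<Sum>s\<in>PZ n (XS S). \<Prod>i<n. Cb b (N i - s i))"
  proof (rule sum.UNION_disjoint)
    show "finite SS" unfolding SS_def by (rule finite_subset[of _ "Pow {..<n}"]) auto
    show "\<forall>S\<in>SS. finite (PZ n (XS S))" by (auto intro!: finite_PZ simp: XS_def)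
    show "\<forall>S\<in>SS. \<forall>S'\<in>SS. S \<noteq> S' \<longrightarrow> PZ n (XS S) \<inter> PZ n (XS S') = {}"
    proof (intro ballI impI)
      fix S S' assume S: "S \<in> SS" and S': "S' \<in> SS" and ne: "S \<noteq> S'"
      show "PZ n (XS S) \<inter> PZ n (XS S') = {}"
      proof (rule ccontr)
        assume "PZ n (XS S) \<inter> PZ n (XS S') \<noteq> {}"
        then obtain s where s: "s \<in> PZ n (XS S)" "s \<in> PZ n (XS S')" by blast
        have "S = S'"
        proof (rule set_eqI)
          fix i show "i \<in> S \<longleftrightarrow> i \<in> S'"
          proof (cases "i < n")
            case True
            then have "s i \<in> XS S i" "s i \<in> XS S' i" using s by (simp_all add: PZ_def)
            then show ?thesis by (auto simp: XS_def split: if_splits)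
          next
            case False then show ?thesis using S S' by (auto simp: SS_def)
          qed
        qed
        with ne show False by simp
      qed
    qed
  qed
  also have "\<dots> = (\<Sum>S\<in>SS. \<Prod>l<n. (if l \<in> S then Bf (2 - a) (- b - 1) else Bf (1 - a) (- b)) (mexp n c p l))"
  proof (intro sum.cong refl)
    fix S assume "S \<in> SS"
    have "(\<Sum>s\<in>PZ n (XS S). \<Prod>i<n. Cb b (N i - s i)) = (\<Prod>l<n. \<Sum>v\<in>XS S l. Cb b (N l - v))"
      by (rule PZ_prod_sum) (simp add: XS_def)
    also have "\<dots> = (\<Prod>l<n. (if l \<in> S then Bf (2 - a) (- b - 1) else Bf (1 - a) (- b)) (mexp n c p l))"
    proof (intro prod.cong refl)
      fix l assume "l \<in> {..<n}"
      then have h: "1 - a \<le> mexp n c p l" using pl by simp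
      show "(\<Sum>v\<in>XS S l. Cb b (N l - v)) = (if l \<in> S then Bf (2 - a) (- b - 1) else Bf (1 - a) (- b)) (mexp n c p l)"
        using F0_val[OF h, of b] F1_val[OF h, of b] by (simp add: XS_def N_def)
    qed
    finally show "(\<Sum>s\<in>PZ n (XS S). \<Prod>i<n. Cb b (N i - s i)) = (\<Prod>l<n. (if l \<in> S then Bf (2 - a) (- b - 1) else Bf (1 - a) (- b)) (mexp n c p l))" .
  qed
  finally show ?thesis by (simp add: SS_def)
qed

lemma finite_RS: "finite (RS n k a c p)"
proof -
  define N where "N = (\<lambda>l. nat (mexp n c p l + a - 1))"
  have "RS n k a c p \<subseteq> PZ n (\<lambda>l. {..N l}) \<times> PZ n (\<lambda>l. {..N l})"
    by (auto simp: RS_def PZ_def N_def)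
  moreover have "finite (PZ n (\<lambda>l. {..N l}) \<times> PZ n (\<lambda>l. {..N l}))" by (auto intro: finite_PZ)
  ultimately show ?thesis by (rule finite_subset)
qed

theorem Psi_Lf:
  "Psi n k a b c = (\<Sum>S\<in>{S. S \<subseteq> {..<n} \<and> card S = k}.
      Lf n c (\<lambda>l. if l \<in> S then Bf (2 - a) (- b - 1) else Bf (1 - a) (- b)))"
proof -
  let ?A = "\<lambda>_::nat. 1 - a"
  let ?SS = "{S. S \<subseteq> {..<n} \<and> card S = k}"
  let ?FS = "\<lambda>S l. if l \<in> S then Bf (2 - a) (- b - 1) else Bf (1 - a) (- b)"
  have "Psi n k a b c = (\<Sum>(p, (r, s))\<in>(SIGMA p:Pc n c ?A. RS n k a c p). (\<Prod>i<n. Cb b (r i)) * wt n c p)"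
    unfolding Psi_alt Psi_terms_eq by (subst sum.reindex[OF Psi_terms_inj]) (simp add: case_prod_beta comp_def)
  also have "\<dots> = (\<Sum>p\<in>Pc n c ?A. \<Sum>(r, s)\<in>RS n k a c p. (\<Prod>i<n. Cb b (r i)) * wt n c p)"
    by (subst sum.Sigma) (auto simp: finite_Pc finite_RS case_prod_beta)
  also have "\<dots> = (\<Sum>p\<in>Pc n c ?A. wt n c p * (\<Sum>S\<in>?SS. \<Prod>l<n. ?FS S l (mexp n c p l)))"
  proof (intro sum.cong refl)
    fix p assume p: "p \<in> Pc n c ?A"
    have "(\<Sum>(r, s)\<in>RS n k a c p. (\<Prod>i<n. Cb b (r i)) * wt n c p) = wt n c p * (\<Sum>(r, s)\<in>RS n k a c p. \<Prod>i<n. Cb b (r i))"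
      by (simp add: sum_distrib_left case_prod_beta mult.commute)
    also have "\<dots> = wt n c p * (\<Sum>S\<in>?SS. \<Prod>l<n. ?FS S l (mexp n c p l))"
      by (simp only: RS_sum[OF p])
    finally show "(\<Sum>(r, s)\<in>RS n k a c p. (\<Prod>i<n. Cb b (r i)) * wt n c p) = wt n c p * (\<Sum>S\<in>?SS. \<Prod>l<n. ?FS S l (mexp n c p l))" .
  qed
  also have "\<dots> = (\<Sum>S\<in>?SS. PS n c ?A (?FS S))"
    unfolding PS_def trm_def by (subst sum.swap) (simp add: sum_distrib_left)
  also have "\<dots> = (\<Sum>S\<in>?SS. Lf n c (?FS S))"
    by (intro sum.cong refl Lf_PS[symmetric]) (auto simp: Bf_def)
  finally show ?thesis .
qed



lemma neg1_eq:
  assumes "even (X - Y)" shows "neg1 X = neg1 Y"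
proof -
  have "even X \<longleftrightarrow> even Y" using assms even_add[of "X - Y" Y] by simp
  then show ?thesis by (simp add: neg1_def)
qed

definition phi :: "nat \<Rightarrow> nat set \<Rightarrow> nat set" where
  "phi n S = {..<n} - (\<lambda>l. n - 1 - l) ` S"

lemma phi_mem: "S \<subseteq> {..<n} \<Longrightarrow> l < n \<Longrightarrow> l \<in> phi n S \<longleftrightarrow> n - 1 - l \<notin> S"
  unfolding phi_def
proof -
  assume S: "S \<subseteq> {..<n}" and l: "l < n"
  have "l \<in> (\<lambda>l. n - 1 - l) ` S \<longleftrightarrow> n - 1 - l \<in> S"
  proof
    assume "l \<in> (\<lambda>l. n - 1 - l) ` S"
    then obtain y where "y \<in> S" "l = n - 1 - y" by auto
    moreover have "y < n" using \<open>y \<in> S\<close> S by auto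
    moreover have "n - 1 - (n - 1 - y) = y" using \<open>y < n\<close> by simp
    ultimately show "n - 1 - l \<in> S" by simp
  next
    assume "n - 1 - l \<in> S"
    moreover have "l = n - 1 - (n - 1 - l)" using l by simp
    ultimately show "l \<in> (\<lambda>l. n - 1 - l) ` S" by blast
  qed
  then show "l \<in> {..<n} - (\<lambda>l. n - 1 - l) ` S \<longleftrightarrow> n - 1 - l \<notin> S" using l by simp
qed

lemma phi_sub: "phi n S \<subseteq> {..<n}" by (auto simp: phi_def)

lemma phi_phi: "S \<subseteq> {..<n} \<Longrightarrow> phi n (phi n S) = S"
proof (rule set_eqI)
  fix x assume S: "S \<subseteq> {..<n}"
  show "x \<in> phi n (phi n S) \<longleftrightarrow> x \<in> S"
  proof (cases "x < n")
    case True
    have "n - 1 - x < n" using True by simp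
    then have "n - 1 - x \<in> phi n S \<longleftrightarrow> x \<notin> S"
      using phi_mem[OF S, of "n - 1 - x"] True by (simp add: Suc_diff_Suc)
    then show ?thesis using phi_mem[OF phi_sub True] by simp
  next
    case False then show ?thesis using S phi_sub by auto
  qed
qed

lemma card_phi: "S \<subseteq> {..<n} \<Longrightarrow> card (phi n S) = n - card S"
proof -
  assume S: "S \<subseteq> {..<n}"
  have inj: "inj_on (\<lambda>l. n - 1 - l) S"
    unfolding inj_on_def
  proof (intro ballI impI)
    fix x y assume "x \<in> S" "y \<in> S" "n - 1 - x = n - 1 - y"
    moreover have "x < n" "y < n" using \<open>x \<in> S\<close> \<open>y \<in> S\<close> S by auto
    ultimately show "x = y" by arith
  qed
  have "card ((\<lambda>l. n - 1 - l) ` S) = card S" using card_image[OF inj] .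
  moreover have "(\<lambda>l. n - 1 - l) ` S \<subseteq> {..<n}" using S by auto
  ultimately show ?thesis unfolding phi_def by (simp add: card_Diff_subset finite_subset[OF _ finite_lessThan])
qed

lemma sum_if_card:
  fixes x y :: int
  assumes "S \<subseteq> {..<n}"
  shows "(\<Sum>l<n. if l \<in> S then x else y) = int (card S) * x + int (n - card S) * y"
proof -
  have fin: "finite S" using assms finite_subset by blast
  have "(\<Sum>l<n. if l \<in> S then x else y) = (\<Sum>l\<in>{..<n} \<inter> {l. l \<in> S}. x) + (\<Sum>l\<in>{..<n} \<inter> - {l. l \<in> S}. y)"
    by (rule sum.If_cases) simp
  moreover have "{..<n} \<inter> {l. l \<in> S} = S" using assms by auto
  moreover have "{..<n} \<inter> - {l. l \<in> S} = {..<n} - S" by auto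
  moreover have "card ({..<n} - S) = n - card S" using assms fin by (simp add: card_Diff_subset)
  ultimately show ?thesis by simp
qed

lemma per_S:
  fixes a b :: int and n c :: nat and S :: "nat set"
  assumes a: "a > 0" and b: "b > 0" and n: "n > 0" and S: "S \<subseteq> {..<n}"
  shows "Lf n c (\<lambda>l. if l \<in> S then Bf (2 - a) (- b - 1) else Bf (1 - a) (- b)) =
         Lf n c (\<lambda>l. if l \<in> phi n S then Bf (2 - (b + 1)) (- (a - 1) - 1) else Bf (1 - (b + 1)) (- (a - 1)))"
proof -
  define D where "D = int c * (int n - 1) + a + b - 2"
  define d where "d = nat D"
  have "0 \<le> int c * (int n - 1)" using n by simp
  then have dD: "int d = D" using a b by (simp add: d_def D_def)
  define eL where "eL l = (if l \<in> S then 2 - a else 1 - a)" for l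
  define gL where "gL l = (if l \<in> S then - b - 1 else - b)" for l
  define eR where "eR l = (if l \<in> phi n S then 1 - b else - b)" for l
  define gR where "gR l = (if l \<in> phi n S then - a else 1 - a)" for l
  define s0 where "s0 = ((-1::real) ^ (c * tri n))"
  have "Lf n c (\<lambda>l. if l \<in> S then Bf (2 - a) (- b - 1) else Bf (1 - a) (- b)) = Lf n c (\<lambda>l. Bf (eL l) (gL l))"
    by (rule Lf_cong) (simp add: eL_def gL_def)
  also have "\<dots> = neg1 (\<Sum>l<n. eL l) * s0 * Lf n c (\<lambda>l. Bf (eL l) (int c * (int n - 1) - 1 - eL l - gL l))"
    unfolding s0_def by (rule Lf_T)
  also have "Lf n c (\<lambda>l. Bf (eL l) (int c * (int n - 1) - 1 - eL l - gL l)) = Lf n c (\<lambda>l. Bf (eL l) (int d))"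
    by (rule Lf_cong) (simp add: eL_def gL_def dD D_def algebra_simps)
  also have "\<dots> = Lf n c (\<lambda>l x. Bf (eL (n - 1 - l)) (int d) (int c * (int n - 1) - x))"
    by (rule Lf_R)
  also have "\<dots> = Lf n c (\<lambda>l x. (-1) ^ d * Bf (int c * (int n - 1) - eL (n - 1 - l) - int d) (int d) x)"
    by (rule Lf_cong) (rule Bf_refl)
  also have "\<dots> = (\<Prod>l<n. (-1) ^ d) * Lf n c (\<lambda>l. Bf (int c * (int n - 1) - eL (n - 1 - l) - int d) (int d))"
    by (rule Lf_scale) simp
  also have "Lf n c (\<lambda>l. Bf (int c * (int n - 1) - eL (n - 1 - l) - int d) (int d)) = Lf n c (\<lambda>l. Bf (eR l) (int d))"
  proof (rule Lf_cong)
    fix l x assume l: "l < n"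
    have "int c * (int n - 1) - eL (n - 1 - l) - int d = eR l"
      using phi_mem[OF S l] by (simp add: eL_def eR_def dD D_def)
    then show "Bf (int c * (int n - 1) - eL (n - 1 - l) - int d) (int d) x = Bf (eR l) (int d) x" by simp
  qed
  finally have L: "Lf n c (\<lambda>l. if l \<in> S then Bf (2 - a) (- b - 1) else Bf (1 - a) (- b)) =
      neg1 (\<Sum>l<n. eL l) * s0 * ((-1) ^ (d * n)) * Lf n c (\<lambda>l. Bf (eR l) (int d))"
    by (simp add: power_mult)
  have "Lf n c (\<lambda>l. if l \<in> phi n S then Bf (2 - (b + 1)) (- (a - 1) - 1) else Bf (1 - (b + 1)) (- (a - 1))) =
      Lf n c (\<lambda>l. Bf (eR l) (gR l))"
    by (rule Lf_cong) (simp add: eR_def gR_def)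
  also have "\<dots> = neg1 (\<Sum>l<n. eR l) * s0 * Lf n c (\<lambda>l. Bf (eR l) (int c * (int n - 1) - 1 - eR l - gR l))"
    unfolding s0_def by (rule Lf_T)
  also have "Lf n c (\<lambda>l. Bf (eR l) (int c * (int n - 1) - 1 - eR l - gR l)) = Lf n c (\<lambda>l. Bf (eR l) (int d))"
    by (rule Lf_cong) (simp add: eR_def gR_def dD D_def algebra_simps)
  finally have R: "Lf n c (\<lambda>l. if l \<in> phi n S then Bf (2 - (b + 1)) (- (a - 1) - 1) else Bf (1 - (b + 1)) (- (a - 1))) =
      neg1 (\<Sum>l<n. eR l) * s0 * Lf n c (\<lambda>l. Bf (eR l) (int d))" .
  have sL: "(\<Sum>l<n. eL l) = int (card S) * (2 - a) + int (n - card S) * (1 - a)"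
    unfolding eL_def by (rule sum_if_card[OF S])
  have sR: "(\<Sum>l<n. eR l) = int (card (phi n S)) * (1 - b) + int (n - card (phi n S)) * (- b)"
    unfolding eR_def by (rule sum_if_card[OF phi_sub])
  have cS: "card S \<le> n" using S by (metis card_lessThan card_mono finite_lessThan)
  have sign: "neg1 (\<Sum>l<n. eL l) * (-1) ^ (d * n) = neg1 (\<Sum>l<n. eR l)"
  proof -
    have "neg1 (\<Sum>l<n. eL l) * (-1) ^ (d * n) = neg1 ((\<Sum>l<n. eL l) + int d * int n)"
      by (simp add: neg1_add neg1_of_nat[of "d * n", simplified])
    also have "\<dots> = neg1 (\<Sum>l<n. eR l)"
    proof (rule neg1_eq)
      define k where "k = card S"
      have ck: "int (n - k) = int n - int k" "int (n - (n - k)) = int k" using cS by (auto simp: k_def)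
      have "(\<Sum>l<n. eL l) + int d * int n - (\<Sum>l<n. eR l) =
          2 * (int k + int n * b - int n) + int c * (int n * (int n - 1))"
        unfolding sL sR card_phi[OF S] k_def[symmetric] ck dD D_def by (simp add: algebra_simps)
      moreover have "even (int n * (int n - 1))" by simp
      ultimately show "even ((\<Sum>l<n. eL l) + int d * int n - (\<Sum>l<n. eR l))" by simp
    qed
    finally show ?thesis .
  qed
  show ?thesis unfolding L R using sign by (simp add: ac_simps)
qed

theorem main:
  fixes a b :: int and n c k :: nat
  assumes "a > 0" and "b > 0" and "n > 0" and "k \<le> n"
  shows "Psi n k a b c = Psi n (n - k) (b + 1) (a - 1) c"
proof -
  have "Psi n k a b c = (\<Sum>S\<in>{S. S \<subseteq> {..<n} \<and> card S = k}.
      Lf n c (\<lambda>l. if l \<in> S then Bf (2 - a) (- b - 1) else Bf (1 - a) (- b)))"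
    by (rule Psi_Lf)
  also have "\<dots> = (\<Sum>S\<in>{S. S \<subseteq> {..<n} \<and> card S = k}.
      Lf n c (\<lambda>l. if l \<in> phi n S then Bf (2 - (b + 1)) (- (a - 1) - 1) else Bf (1 - (b + 1)) (- (a - 1))))"
    using assms by (intro sum.cong refl per_S) auto
  also have "\<dots> = (\<Sum>S\<in>{S. S \<subseteq> {..<n} \<and> card S = n - k}.
      Lf n c (\<lambda>l. if l \<in> S then Bf (2 - (b + 1)) (- (a - 1) - 1) else Bf (1 - (b + 1)) (- (a - 1))))"
  proof (rule sum.reindex_bij_witness[where i="phi n" and j="phi n"])
    fix S assume "S \<in> {S. S \<subseteq> {..<n} \<and> card S = k}"
    then show "phi n (phi n S) = S" "phi n S \<in> {S. S \<subseteq> {..<n} \<and> card S = n - k}"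
      by (auto simp: phi_phi phi_sub card_phi)
  next
    fix S assume S: "S \<in> {S. S \<subseteq> {..<n} \<and> card S = n - k}"
    then show "phi n (phi n S) = S" by (auto simp: phi_phi)
    show "phi n S \<in> {S. S \<subseteq> {..<n} \<and> card S = k}"
      using S assms(4) by (auto simp: phi_sub card_phi)
  qed auto
  also have "\<dots> = Psi n (n - k) (b + 1) (a - 1) c"
    by (rule Psi_Lf[symmetric])
  finally show ?thesis .
qed


theorem proposition5p14:
  fixes a b :: int and n c k :: nat
  assumes "a > 0" and "b > 0" and "n > 0" and "k \<le> n"
  shows "Psi n k a b c = Psi n (n - k) (b + 1) (a - 1) c"
  using assms by (rule main)

end
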